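(* Let $\mathcal{X}\subset\mathbb{R}^d$ be compact, $k$ a kernel on $\mathcal{X}$, $\sigma>0$, and suppose $k^\sigma(x,y)\le B$ for all $x,y\in\mathcal{X}$. Let $f\in\mathcal{H}_k$, $g\in\mathcal{H}_{\sigma^2\delta}$ and $h=f+g$ (so $h\in\mathcal{H}_{k^\sigma}$). Let $x_1,\dots,x_T$ be generated by Algorithm 3: $x_t\in\arg\max_{x\in\mathcal{X}}\widehat m_{t-1}(x)+\|h\|_{\mathcal{H}_{k^\sigma}}\widehat\sigma_{t-1}(x)$, then observe $y_t=h(x_t)$; assume the maximizers exist and that the points $x_1,\dots,x_T$ are pairwise distinct. Let $C_3=\frac{8B}{\log(1+B\sigma^{-2})}$. Then $$R_T\le\|h\|_{\mathcal{H}_{k^\sigma}}\sqrt{TC_3\gamma_T}+2T\big(\|h\|_{\mathcal{H}_{k^\sigma}}+\|g\|_{\mathcal{H}_{\sigma^2\delta}}\big)\sigma,$$ $$r_T\le\|h\|_{\mathcal{H}_{k^\sigma}}\sqrt{\frac{C_3\gamma_T}{T}}+2\big(\|h\|_{\mathcal{H}_{k^\sigma}}+\|g\|_{\mathcal{H}_{\sigma^2\delta}}\big)\sigma.$$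
   Context: $\delta(x,y)=1$ if $x=y$ and $0$ otherwise; $k^\sigma(x,y)=k(x,y)+\sigma^2\delta(x,y)$; $\mathcal{H}_{\sigma^2\delta}$ is the RKHS of the kernel $\sigma^2\delta$. For query points $x_1,\dots,x_t$: $\mathbf{k}_t(x)=[k(x,x_i)]_{i\le t}$, $\mathbf{K}_t=[k(x_i,x_j)]_{i,j\le t}$, $\mathbf{y}_t=[y_1,\dots,y_t]^T$, $\widehat m_t(x)=\mathbf{k}_t(x)^T(\mathbf{K}_t+\sigma^2I)^{-1}\mathbf{y}_t$, $\widehat\sigma_t^2(x)=k(x,x)-\mathbf{k}_t(x)^T(\mathbf{K}_t+\sigma^2I)^{-1}\mathbf{k}_t(x)$, $\widehat m_0\equiv0$, $\widehat\sigma_0^2(x)=k(x,x)$. $x^*\in\arg\max_{\mathcal{X}}f$; $R_T=\sum_{t=1}^T(f(x^* )-f(x_t))$; $r_T=f(x^* )-\max_{t\le T}f(x_t)$; $\gamma_T=\max_{x_1,\dots,x_T\in\mathcal{X}}\frac12\log\det(\mathbf{I}_T+\sigma^{-2}\mathbf{K}_T)$. *)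

theory Defs
  imports "HOL-Analysis.Analysis" "Jordan_Normal_Form.Determinant" "Jordan_Normal_Form.Gauss_Jordan_Elimination"
begin

definition kexp :: "('a \<Rightarrow> 'a \<Rightarrow> real) \<Rightarrow> ('a \<times> real) list \<Rightarrow> 'a \<Rightarrow> real" where
  "kexp k ps x = (\<Sum>(z, a) \<leftarrow> ps. a * k x z)"

definition kgram :: "('a \<Rightarrow> 'a \<Rightarrow> real) \<Rightarrow> ('a \<times> real) list \<Rightarrow> real" where
  "kgram k ps = (\<Sum>(z, a) \<leftarrow> ps. \<Sum>(w, b) \<leftarrow> ps. a * b * k z w)"

definition kdiff :: "('a \<times> real) list \<Rightarrow> ('a \<times> real) list \<Rightarrow> ('a \<times> real) list" where
  "kdiff ps qs = ps @ map (\<lambda>(z, b). (z, - b)) qs"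

definition is_kernel :: "'a set \<Rightarrow> ('a \<Rightarrow> 'a \<Rightarrow> real) \<Rightarrow> bool" where
  "is_kernel X k \<longleftrightarrow> (\<forall>x\<in>X. \<forall>y\<in>X. k x y = k y x) \<and>
     (\<forall>ps. set (map fst ps) \<subseteq> X \<longrightarrow> kgram k ps \<ge> 0)"

definition rkhs_approx :: "'a set \<Rightarrow> ('a \<Rightarrow> 'a \<Rightarrow> real) \<Rightarrow> ('a \<Rightarrow> real) \<Rightarrow> (nat \<Rightarrow> ('a \<times> real) list) \<Rightarrow> bool" where
  "rkhs_approx X k f s \<longleftrightarrow>
     (\<forall>n. set (map fst (s n)) \<subseteq> X) \<and>
     (\<forall>e>0. \<exists>N. \<forall>m\<ge>N. \<forall>n\<ge>N. kgram k (kdiff (s m) (s n)) < e) \<and>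
     (\<forall>x\<in>X. (\<lambda>n. kexp k (s n) x) \<longlonglongrightarrow> f x)"

text \<open>f \<in> H_k (functions are only considered on X).\<close>
definition in_rkhs :: "'a set \<Rightarrow> ('a \<Rightarrow> 'a \<Rightarrow> real) \<Rightarrow> ('a \<Rightarrow> real) \<Rightarrow> bool" where
  "in_rkhs X k f \<longleftrightarrow> (\<exists>s. rkhs_approx X k f s)"

text \<open>RKHS norm: the limit of the pre-RKHS norms along an approximating sequence (this
limit is the same for every approximating sequence; we take the infimum for definiteness).\<close>
definition rkhs_norm :: "'a set \<Rightarrow> ('a \<Rightarrow> 'a \<Rightarrow> real) \<Rightarrow> ('a \<Rightarrow> real) \<Rightarrow> real" where
  "rkhs_norm X k f = Inf {L. \<exists>s. rkhs_approx X k f s \<and> (\<lambda>n. sqrt (kgram k (s n))) \<longlonglongrightarrow> L}"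

definition delta :: "'a \<Rightarrow> 'a \<Rightarrow> real" where
  "delta x y = (if x = y then 1 else 0)"

definition ksig :: "('a \<Rightarrow> 'a \<Rightarrow> real) \<Rightarrow> real \<Rightarrow> 'a \<Rightarrow> 'a \<Rightarrow> real" where
  "ksig k \<sigma> x y = k x y + \<sigma>\<^sup>2 * delta x y"

definition gram_mat :: "('a \<Rightarrow> 'a \<Rightarrow> real) \<Rightarrow> 'a list \<Rightarrow> real mat" where
  "gram_mat k xs = mat (length xs) (length xs) (\<lambda>(i, j). k (xs ! i) (xs ! j))"

definition kvec :: "('a \<Rightarrow> 'a \<Rightarrow> real) \<Rightarrow> 'a list \<Rightarrow> 'a \<Rightarrow> real vec" where
  "kvec k xs x = vec (length xs) (\<lambda>i. k x (xs ! i))"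

definition reg_inv :: "('a \<Rightarrow> 'a \<Rightarrow> real) \<Rightarrow> real \<Rightarrow> 'a list \<Rightarrow> real mat" where
  "reg_inv k \<sigma> xs = the (mat_inverse (gram_mat k xs + \<sigma>\<^sup>2 \<cdot>\<^sub>m 1\<^sub>m (length xs)))"

definition post_mean :: "('a \<Rightarrow> 'a \<Rightarrow> real) \<Rightarrow> real \<Rightarrow> 'a list \<Rightarrow> real list \<Rightarrow> 'a \<Rightarrow> real" where
  "post_mean k \<sigma> xs ys x =
     (if xs = [] then 0 else scalar_prod (kvec k xs x) (reg_inv k \<sigma> xs *\<^sub>v vec (length ys) (\<lambda>i. ys ! i)))"

definition post_var :: "('a \<Rightarrow> 'a \<Rightarrow> real) \<Rightarrow> real \<Rightarrow> 'a list \<Rightarrow> 'a \<Rightarrow> real" where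
  "post_var k \<sigma> xs x =
     (if xs = [] then k x x else k x x - scalar_prod (kvec k xs x) (reg_inv k \<sigma> xs *\<^sub>v kvec k xs x))"

definition max_info_gain :: "'a set \<Rightarrow> ('a \<Rightarrow> 'a \<Rightarrow> real) \<Rightarrow> real \<Rightarrow> nat \<Rightarrow> real" where
  "max_info_gain X k \<sigma> T =
     (SUP xs \<in> {xs. length xs = T \<and> set xs \<subseteq> X}.
        1/2 * ln (det (1\<^sub>m T + (1 / \<sigma>\<^sup>2) \<cdot>\<^sub>m gram_mat k xs)))"

end

theory Submission
  imports Defs
begin


definition ip :: "('a \<Rightarrow> 'a \<Rightarrow> real) \<Rightarrow> ('a \<times> real) list \<Rightarrow> ('a \<times> real) list \<Rightarrow> real" where
  "ip k p q = (\<Sum>(z, a) \<leftarrow> p. \<Sum>(w, b) \<leftarrow> q. a * b * k z w)"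

definition evalc :: "('a \<times> real) list \<Rightarrow> ('a \<Rightarrow> real) \<Rightarrow> real" where
  "evalc c F = (\<Sum>(z, a) \<leftarrow> c. a * F z)"

definition negl :: "('a \<times> real) list \<Rightarrow> ('a \<times> real) list" where
  "negl q = map (\<lambda>(z, b). (z, - b)) q"

definition scl :: "real \<Rightarrow> ('a \<times> real) list \<Rightarrow> ('a \<times> real) list" where
  "scl t q = map (\<lambda>(z, b). (z, t * b)) q"

lemma sum_list_map_idx: "(\<Sum>x\<leftarrow>xs. f x) = (\<Sum>i<length xs. f (xs ! i))"
  by (simp add: sum_list_sum_nth atLeast0LessThan)

lemma ip_idx: "ip k p q = (\<Sum>i<length p. \<Sum>j<length q. snd (p!i) * snd (q!j) * k (fst (p!i)) (fst (q!j)))"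
  unfolding ip_def sum_list_map_idx by (simp add: case_prod_unfold)

lemma kgram_ip: "kgram k p = ip k p p"
  unfolding kgram_def ip_def ..

lemma kexp_idx: "kexp k p x = (\<Sum>i<length p. snd (p!i) * k x (fst (p!i)))"
  unfolding kexp_def sum_list_map_idx by (simp add: case_prod_unfold)

lemma evalc_idx: "evalc c F = (\<Sum>i<length c. snd (c!i) * F (fst (c!i)))"
  unfolding evalc_def sum_list_map_idx by (simp add: case_prod_unfold)

lemma ip_append1: "ip k (p @ q) r = ip k p r + ip k q r"
  unfolding ip_def by simp

lemma ip_append2: "ip k r (p @ q) = ip k r p + ip k r q"
  unfolding ip_def by (induct r) auto

lemma negl_len[simp]: "length (negl q) = length q" unfolding negl_def by simp
lemma negl_nth[simp]: "i < length q \<Longrightarrow> negl q ! i = (fst (q!i), - snd (q!i))"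
  unfolding negl_def by (simp add: case_prod_unfold)
lemma scl_len[simp]: "length (scl t q) = length q" unfolding scl_def by simp
lemma scl_nth[simp]: "i < length q \<Longrightarrow> scl t q ! i = (fst (q!i), t * snd (q!i))"
  unfolding scl_def by (simp add: case_prod_unfold)

lemma ip_negl1: "ip k (negl q) r = - ip k q r"
  unfolding ip_idx by (simp add: sum_negf[symmetric])
lemma ip_negl2: "ip k r (negl q) = - ip k r q"
  unfolding ip_idx by (simp add: sum_negf[symmetric])
lemma ip_scl1: "ip k (scl t q) r = t * ip k q r"
  unfolding ip_idx by (simp add: sum_distrib_left mult.assoc)
lemma ip_scl2: "ip k r (scl t q) = t * ip k r q"
  unfolding ip_idx by (simp add: sum_distrib_left algebra_simps)

lemma kdiff_negl: "kdiff p q = p @ negl q"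
  unfolding kdiff_def negl_def ..

lemma centres_append: "set (map fst (p @ q)) = set (map fst p) \<union> set (map fst q)" by simp
lemma centres_negl[simp]: "map fst (negl q) = map fst q"
  unfolding negl_def by (induct q) auto
lemma centres_scl[simp]: "map fst (scl t q) = map fst q"
  unfolding scl_def by (induct q) auto

lemma ip_sym:
  assumes "is_kernel X k" "set (map fst p) \<subseteq> X" "set (map fst q) \<subseteq> X"
  shows "ip k p q = ip k q p"
proof -
  have s: "k (fst (p!i)) (fst (q!j)) = k (fst (q!j)) (fst (p!i))" if "i < length p" "j < length q" for i j
  proof -
    have "fst (p!i) \<in> X" using assms(2) that(1) by (auto simp: set_conv_nth)
    moreover have "fst (q!j) \<in> X" using assms(3) that(2) by (auto simp: set_conv_nth)
    ultimately show ?thesis using assms(1) unfolding is_kernel_def by blast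
  qed
  show ?thesis unfolding ip_idx
    by (subst sum.swap) (intro sum.cong refl, simp add: s mult.commute)
qed

lemma kexp_ip: "kexp k p x = ip k [(x, 1)] p"
  unfolding kexp_def ip_def by simp

lemma evalc_kexp: "evalc c (kexp k p) = ip k c p"
  unfolding evalc_def kexp_def ip_def by (simp add: case_prod_unfold sum_list_const_mult mult.assoc)

lemma evalc_add: "evalc c (\<lambda>u. F u + G u) = evalc c F + evalc c G"
  unfolding evalc_def by (simp add: case_prod_unfold distrib_left sum_list_addf)

lemma kgram_kdiff:
  assumes "is_kernel X k" "set (map fst p) \<subseteq> X" "set (map fst q) \<subseteq> X"
  shows "kgram k (kdiff p q) = kgram k p - 2 * ip k p q + kgram k q"
  using ip_sym[OF assms(1) assms(3) assms(2)]
  unfolding kgram_ip kdiff_negl ip_append1 ip_append2 ip_negl1 ip_negl2 by simp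

lemma kgram_nonneg:
  assumes "is_kernel X k" "set (map fst p) \<subseteq> X"
  shows "kgram k p \<ge> 0"
  using assms unfolding is_kernel_def by auto

lemma cauchy_schwarz_ip:
  assumes K: "is_kernel X k" and p: "set (map fst p) \<subseteq> X" and q: "set (map fst q) \<subseteq> X"
  shows "(ip k p q)\<^sup>2 \<le> kgram k p * kgram k q"
proof -
  have key: "0 \<le> kgram k p - 2 * t * ip k p q + t\<^sup>2 * kgram k q" for t
  proof -
    have c: "set (map fst (scl t q)) \<subseteq> X" using q by simp
    have "0 \<le> kgram k (kdiff p (scl t q))" by (rule kgram_nonneg[OF K], unfold kdiff_negl, insert p q, auto)
    also have "\<dots> = kgram k p - 2 * t * ip k p q + t\<^sup>2 * kgram k q"
      unfolding kgram_kdiff[OF K p c] by (simp add: kgram_ip ip_scl1 ip_scl2 power2_eq_square)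
    finally show ?thesis .
  qed
  have pp: "kgram k p \<ge> 0" "kgram k q \<ge> 0" using kgram_nonneg K p q by auto
  show ?thesis
  proof (cases "kgram k q = 0")
    case True
    have "ip k p q = 0"
    proof (rule ccontr)
      assume ne: "ip k p q \<noteq> 0"
      define t where "t = (kgram k p + 1) / (2 * ip k p q)"
      have "2 * t * ip k p q = kgram k p + 1" using ne unfolding t_def by simp
      with key[of t] True show False by simp
    qed
    then show ?thesis using True by simp
  next
    case False
    then have qpos: "kgram k q > 0" using pp by simp
    define t where "t = ip k p q / kgram k q"
    have "0 \<le> kgram k p - 2 * t * ip k p q + t\<^sup>2 * kgram k q" by (rule key)
    also have "\<dots> = kgram k p - (ip k p q)\<^sup>2 / kgram k q"
      using qpos unfolding t_def by (simp add: power2_eq_square field_simps)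
    finally show ?thesis using qpos by (simp add: field_simps)
  qed
qed

lemma cs_abs:
  assumes K: "is_kernel X k" and p: "set (map fst p) \<subseteq> X" and q: "set (map fst q) \<subseteq> X"
  shows "\<bar>ip k p q\<bar> \<le> sqrt (kgram k p) * sqrt (kgram k q)"
proof -
  have "\<bar>ip k p q\<bar> = sqrt ((ip k p q)\<^sup>2)" by simp
  also have "\<dots> \<le> sqrt (kgram k p * kgram k q)" using cauchy_schwarz_ip[OF assms] by (rule real_sqrt_le_mono)
  finally show ?thesis by (simp add: real_sqrt_mult)
qed




lemma sqrt_tri:
  assumes K: "is_kernel X k" and p: "set (map fst p) \<subseteq> X" and q: "set (map fst q) \<subseteq> X"
  shows "sqrt (kgram k p) \<le> sqrt (kgram k (kdiff p q)) + sqrt (kgram k q)"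
proof -
  define d where "d = kdiff p q"
  have dX: "set (map fst d) \<subseteq> X" unfolding d_def kdiff_negl using p q by auto
  have ipd: "ip k d q = ip k p q - kgram k q"
    unfolding d_def kdiff_negl ip_append1 ip_negl1 kgram_ip by simp
  have e: "kgram k p = kgram k d + 2 * ip k d q + kgram k q"
    unfolding ipd unfolding d_def kgram_kdiff[OF K p q] by simp
  have "ip k d q \<le> sqrt (kgram k d) * sqrt (kgram k q)" using cs_abs[OF K dX q] by simp
  then have "kgram k p \<le> (sqrt (kgram k d) + sqrt (kgram k q))\<^sup>2"
    unfolding e power2_sum using kgram_nonneg[OF K dX] kgram_nonneg[OF K q] by simp
  then have "sqrt (kgram k p) \<le> sqrt ((sqrt (kgram k d) + sqrt (kgram k q))\<^sup>2)" by (rule real_sqrt_le_mono)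
  then show ?thesis unfolding d_def using kgram_nonneg[OF K dX] kgram_nonneg[OF K q] d_def by simp
qed

lemma kgram_kdiff_sym:
  assumes K: "is_kernel X k" and p: "set (map fst p) \<subseteq> X" and q: "set (map fst q) \<subseteq> X"
  shows "kgram k (kdiff p q) = kgram k (kdiff q p)"
  using kgram_kdiff[OF K p q] kgram_kdiff[OF K q p] ip_sym[OF K p q] by simp

lemma sqrt_diff_le:
  assumes K: "is_kernel X k" and p: "set (map fst p) \<subseteq> X" and q: "set (map fst q) \<subseteq> X"
  shows "\<bar>sqrt (kgram k p) - sqrt (kgram k q)\<bar> \<le> sqrt (kgram k (kdiff p q))"
  using sqrt_tri[OF K p q] sqrt_tri[OF K q p] kgram_kdiff_sym[OF K p q] by (simp add: abs_le_iff)

lemma approx_norm_convergent: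
  assumes K: "is_kernel X k" and a: "rkhs_approx X k f s"
  shows "convergent (\<lambda>n. sqrt (kgram k (s n)))"
proof -
  have cX: "\<And>n. set (map fst (s n)) \<subseteq> X" using a unfolding rkhs_approx_def by auto
  have "Cauchy (\<lambda>n. sqrt (kgram k (s n)))"
  proof (rule metric_CauchyI)
    fix e :: real assume e: "e > 0"
    then obtain N where N: "\<forall>m\<ge>N. \<forall>n\<ge>N. kgram k (kdiff (s m) (s n)) < e\<^sup>2"
      using a unfolding rkhs_approx_def by (meson zero_less_power)
    show "\<exists>M. \<forall>m\<ge>M. \<forall>n\<ge>M. dist (sqrt (kgram k (s m))) (sqrt (kgram k (s n))) < e"
    proof (intro exI allI impI)
      fix m n assume "m \<ge> N" "n \<ge> N"
      then have "kgram k (kdiff (s m) (s n)) < e\<^sup>2" using N by auto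
      then have "sqrt (kgram k (kdiff (s m) (s n))) < sqrt (e\<^sup>2)" by (rule real_sqrt_less_mono)
      then have "sqrt (kgram k (kdiff (s m) (s n))) < e" using e by simp
      then show "dist (sqrt (kgram k (s m))) (sqrt (kgram k (s n))) < e"
        using sqrt_diff_le[OF K cX cX, of m n] unfolding dist_real_def by linarith
    qed
  qed
  then show ?thesis by (simp add: Cauchy_convergent_iff)
qed

lemma approx_eval_bound:
  assumes K: "is_kernel X k" and a: "rkhs_approx X k f s" and L: "(\<lambda>n. sqrt (kgram k (s n))) \<longlonglongrightarrow> L"
    and c: "set (map fst c) \<subseteq> X"
  shows "\<bar>evalc c f\<bar> \<le> sqrt (kgram k c) * L"
proof -
  have cX: "\<And>n. set (map fst (s n)) \<subseteq> X" using a unfolding rkhs_approx_def by auto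
  have pw: "\<forall>x\<in>X. (\<lambda>n. kexp k (s n) x) \<longlonglongrightarrow> f x" using a unfolding rkhs_approx_def by auto
  have cm: "fst (c!i) \<in> X" if "i < length c" for i using c that by (auto simp: set_conv_nth)
  have t: "(\<lambda>n. evalc c (kexp k (s n))) \<longlonglongrightarrow> evalc c f"
    unfolding evalc_idx by (intro tendsto_sum tendsto_mult_left) (use pw cm in auto)
  have t2: "(\<lambda>n. sqrt (kgram k c) * sqrt (kgram k (s n))) \<longlonglongrightarrow> sqrt (kgram k c) * L"
    by (intro tendsto_mult_left L)
  have "\<forall>n. \<bar>evalc c (kexp k (s n))\<bar> \<le> sqrt (kgram k c) * sqrt (kgram k (s n))"
    unfolding evalc_kexp using cs_abs[OF K c cX] by auto
  then show ?thesis
    by (intro LIMSEQ_le[OF tendsto_rabs[OF t] t2]) auto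
qed

lemma rkhs_norm_props:
  assumes K: "is_kernel X k" and f: "in_rkhs X k f"
  shows "rkhs_norm X k f \<ge> 0"
    and "\<And>c. set (map fst c) \<subseteq> X \<Longrightarrow> \<bar>evalc c f\<bar> \<le> rkhs_norm X k f * sqrt (kgram k c)"
proof -
  define S where "S = {L. \<exists>s. rkhs_approx X k f s \<and> (\<lambda>n. sqrt (kgram k (s n))) \<longlonglongrightarrow> L}"
  have rn: "rkhs_norm X k f = Inf S" unfolding S_def rkhs_norm_def ..
  obtain s where s: "rkhs_approx X k f s" using f unfolding in_rkhs_def by auto
  then obtain L0 where "(\<lambda>n. sqrt (kgram k (s n))) \<longlonglongrightarrow> L0"
    using approx_norm_convergent[OF K s] unfolding convergent_def by auto
  with s have ne: "S \<noteq> {}" unfolding S_def by auto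
  have nn: "L \<ge> 0" if "L \<in> S" for L
  proof -
    from that obtain s where s: "rkhs_approx X k f s" and "(\<lambda>n. sqrt (kgram k (s n))) \<longlonglongrightarrow> L" unfolding S_def by auto
    have "\<And>n. kgram k (s n) \<ge> 0" using s kgram_nonneg[OF K] unfolding rkhs_approx_def by auto
    then show ?thesis by (intro LIMSEQ_le_const[OF \<open>_ \<longlonglongrightarrow> L\<close>]) auto
  qed
  show "rkhs_norm X k f \<ge> 0" unfolding rn by (rule cInf_greatest[OF ne nn])
  fix c :: "('a \<times> real) list" assume c: "set (map fst c) \<subseteq> X"
  have bd: "\<bar>evalc c f\<bar> \<le> sqrt (kgram k c) * L" if "L \<in> S" for L
    using that approx_eval_bound[OF K _ _ c] unfolding S_def by auto
  show "\<bar>evalc c f\<bar> \<le> rkhs_norm X k f * sqrt (kgram k c)"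
  proof (cases "sqrt (kgram k c) = 0")
    case True
    obtain L where "L \<in> S" using ne by auto
    from bd[OF this] True show ?thesis by simp
  next
    case False
    then have qp: "sqrt (kgram k c) > 0" using kgram_nonneg[OF K c] by simp
    have "\<bar>evalc c f\<bar> / sqrt (kgram k c) \<le> Inf S"
      by (rule cInf_greatest[OF ne]) (use bd qp in \<open>auto simp: divide_le_eq mult.commute\<close>)
    then show ?thesis unfolding rn using qp by (simp add: divide_le_eq mult.commute)
  qed
qed




lemma gram_carrier[simp]: "gram_mat k xs \<in> carrier_mat (length xs) (length xs)"
  unfolding gram_mat_def by simp
lemma gram_index[simp]: "i < length xs \<Longrightarrow> j < length xs \<Longrightarrow> gram_mat k xs $$ (i,j) = k (xs!i) (xs!j)"
  unfolding gram_mat_def by simp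
lemma gram_dims[simp]: "dim_row (gram_mat k xs) = length xs" "dim_col (gram_mat k xs) = length xs"
  unfolding gram_mat_def by simp_all
lemma kvec_carrier[simp]: "kvec k xs x \<in> carrier_vec (length xs)" unfolding kvec_def by simp
lemma kvec_dim[simp]: "dim_vec (kvec k xs x) = length xs" unfolding kvec_def by simp
lemma kvec_index[simp]: "i < length xs \<Longrightarrow> kvec k xs x $ i = k x (xs!i)" unfolding kvec_def by simp

definition Am :: "('a \<Rightarrow> 'a \<Rightarrow> real) \<Rightarrow> real \<Rightarrow> 'a list \<Rightarrow> real mat" where
  "Am k \<sigma> xs = gram_mat k xs + \<sigma>\<^sup>2 \<cdot>\<^sub>m 1\<^sub>m (length xs)"

lemma Am_carrier[simp]: "Am k \<sigma> xs \<in> carrier_mat (length xs) (length xs)"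
  unfolding Am_def by simp
lemma Am_dims[simp]: "dim_row (Am k \<sigma> xs) = length xs" "dim_col (Am k \<sigma> xs) = length xs"
  unfolding Am_def by simp_all
lemma Am_index: "i < length xs \<Longrightarrow> j < length xs \<Longrightarrow>
   Am k \<sigma> xs $$ (i,j) = k (xs!i) (xs!j) + (if i = j then \<sigma>\<^sup>2 else 0)"
  unfolding Am_def by simp

lemma quad_idx:
  assumes "(M :: real mat) \<in> carrier_mat n n" "v \<in> carrier_vec n"
  shows "v \<bullet> (M *\<^sub>v v) = (\<Sum>i<n. \<Sum>j<n. v$i * v$j * M$$(i,j))"
proof -
  have "v \<bullet> (M *\<^sub>v v) = (\<Sum>i<n. v$i * (\<Sum>j<n. M$$(i,j) * v$j))"
    using assms unfolding scalar_prod_def by (auto simp: atLeast0LessThan scalar_prod_def intro!: sum.cong)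
  also have "\<dots> = (\<Sum>i<n. \<Sum>j<n. v$i * v$j * M$$(i,j))"
    by (simp add: sum_distrib_left mult_ac)
  finally show ?thesis .
qed

definition vexp :: "'a list \<Rightarrow> real vec \<Rightarrow> ('a \<times> real) list" where
  "vexp xs v = map (\<lambda>i. (xs!i, v$i)) [0..<length xs]"

lemma vexp_len[simp]: "length (vexp xs v) = length xs" unfolding vexp_def by simp
lemma vexp_nth[simp]: "i < length xs \<Longrightarrow> vexp xs v ! i = (xs!i, v$i)" unfolding vexp_def by simp
lemma vexp_centres[simp]: "map fst (vexp xs v) = xs"
  unfolding vexp_def by (rule nth_equalityI) auto

lemma quad_gram:
  assumes "v \<in> carrier_vec (length xs)"
  shows "v \<bullet> (gram_mat k xs *\<^sub>v v) = kgram k (vexp xs v)"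
  unfolding quad_idx[OF gram_carrier assms] kgram_ip ip_idx by (auto intro!: sum.cong)

lemma quad_Am:
  assumes K: "is_kernel X k" and xs: "set xs \<subseteq> X" and v: "v \<in> carrier_vec (length xs)"
  shows "v \<bullet> (Am k \<sigma> xs *\<^sub>v v) = kgram k (vexp xs v) + \<sigma>\<^sup>2 * (v \<bullet> v)"
    and "v \<bullet> (Am k \<sigma> xs *\<^sub>v v) \<ge> \<sigma>\<^sup>2 * (v \<bullet> v)"
proof -
  have "Am k \<sigma> xs *\<^sub>v v = gram_mat k xs *\<^sub>v v + \<sigma>\<^sup>2 \<cdot>\<^sub>v v"
    unfolding Am_def by (subst add_mult_distrib_mat_vec[of _ "length xs" "length xs"]) (use v in auto)
  then show e: "v \<bullet> (Am k \<sigma> xs *\<^sub>v v) = kgram k (vexp xs v) + \<sigma>\<^sup>2 * (v \<bullet> v)"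
  proof -
    have "v \<bullet> (gram_mat k xs *\<^sub>v v + \<sigma>\<^sup>2 \<cdot>\<^sub>v v) = v \<bullet> (gram_mat k xs *\<^sub>v v) + v \<bullet> (\<sigma>\<^sup>2 \<cdot>\<^sub>v v)"
      by (rule scalar_prod_add_distrib[OF v]) (use v mult_mat_vec_carrier[OF gram_carrier v] in auto)
    then show ?thesis using \<open>Am k \<sigma> xs *\<^sub>v v = _\<close> v by (simp add: quad_gram)
  qed
  have "kgram k (vexp xs v) \<ge> 0" by (rule kgram_nonneg[OF K]) (simp add: xs)
  with e show "v \<bullet> (Am k \<sigma> xs *\<^sub>v v) \<ge> \<sigma>\<^sup>2 * (v \<bullet> v)" by simp
qed

lemma sprod_self_nonneg: "scalar_prod (v :: real vec) v \<ge> 0"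
  unfolding scalar_prod_def by (auto intro: sum_nonneg)

lemma sprod_self_zero: assumes "(v :: real vec) \<in> carrier_vec n" "scalar_prod v v = 0" shows "v = 0\<^sub>v n"
proof -
  have "\<forall>i\<in>{0..<dim_vec v}. v$i * v$i = 0"
    using assms(2) unfolding scalar_prod_def by (subst sum_nonneg_eq_0_iff[symmetric]) auto
  then show ?thesis using assms(1) by (intro eq_vecI) auto
qed

lemma Am_det_nz:
  assumes K: "is_kernel X k" and xs: "set xs \<subseteq> X" and s: "\<sigma> > 0"
  shows "det (Am k \<sigma> xs) \<noteq> 0"
proof
  assume "det (Am k \<sigma> xs) = 0"
  then obtain v where v: "v \<in> carrier_vec (length xs)" "v \<noteq> 0\<^sub>v (length xs)" "Am k \<sigma> xs *\<^sub>v v = 0\<^sub>v (length xs)"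
    using det_0_iff_vec_prod_zero_field[OF Am_carrier] by blast
  have "\<sigma>\<^sup>2 * (v \<bullet> v) \<le> 0" using quad_Am(2)[OF K xs v(1), of \<sigma>] v by simp
  then have "v \<bullet> v \<le> 0" using s by (simp add: mult_le_0_iff)
  then have "v \<bullet> v = 0" using sprod_self_nonneg[of v] by simp
  then have "v = 0\<^sub>v (length xs)" by (rule sprod_self_zero[OF v(1)])
  with v(2) show False by simp
qed

lemma reg_inv_props:
  assumes K: "is_kernel X k" and xs: "set xs \<subseteq> X" and s: "\<sigma> > 0"
  shows "Am k \<sigma> xs * reg_inv k \<sigma> xs = 1\<^sub>m (length xs)"
    "reg_inv k \<sigma> xs * Am k \<sigma> xs = 1\<^sub>m (length xs)"
    "reg_inv k \<sigma> xs \<in> carrier_mat (length xs) (length xs)"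
proof -
  have u: "Am k \<sigma> xs \<in> Units (ring_mat TYPE(real) (length xs) ())"
    by (rule det_non_zero_imp_unit[OF Am_carrier Am_det_nz[OF K xs s]])
  have "mat_inverse (Am k \<sigma> xs) \<noteq> None"
    using mat_inverse(1)[OF Am_carrier] u by metis
  then obtain R where R: "mat_inverse (Am k \<sigma> xs) = Some R" by auto
  have ri: "reg_inv k \<sigma> xs = R" unfolding reg_inv_def using R by (simp add: Am_def)
  from mat_inverse(2)[OF Am_carrier R] show "Am k \<sigma> xs * reg_inv k \<sigma> xs = 1\<^sub>m (length xs)"
    "reg_inv k \<sigma> xs * Am k \<sigma> xs = 1\<^sub>m (length xs)"
    "reg_inv k \<sigma> xs \<in> carrier_mat (length xs) (length xs)" unfolding ri by auto
qed




context
  fixes X :: "'a set" and k :: "'a \<Rightarrow> 'a \<Rightarrow> real" and \<sigma> :: real and xs :: "'a list"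
  assumes K: "is_kernel X k" and xsX: "set xs \<subseteq> X" and sp: "\<sigma> > 0"
begin

abbreviation "nxs \<equiv> length xs"
abbreviation "Axs \<equiv> Am k \<sigma> xs"
abbreviation "Rxs \<equiv> reg_inv k \<sigma> xs"

lemma ksym: "a \<in> X \<Longrightarrow> b \<in> X \<Longrightarrow> k a b = k b a" using K unfolding is_kernel_def by auto
lemma xsin: "i < nxs \<Longrightarrow> xs ! i \<in> X" using xsX by auto

lemmas RP = reg_inv_props[OF K xsX sp]

lemma A_sym: "transpose_mat Axs = Axs"
proof (rule eq_matI)
  fix i j assume "i < dim_row Axs" "j < dim_col Axs"
  then have ij: "i < nxs" "j < nxs" by auto
  have "k (xs!j) (xs!i) = k (xs!i) (xs!j)" using ksym[OF xsin[OF ij(2)] xsin[OF ij(1)]] .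
  then show "transpose_mat Axs $$ (i,j) = Axs $$ (i,j)" using ij by (simp add: Am_index)
qed auto

lemma R_sym: "transpose_mat Rxs = Rxs"
proof -
  have Rc: "Rxs \<in> carrier_mat nxs nxs" by (rule RP(3))
  have "transpose_mat Rxs * Axs = 1\<^sub>m nxs"
    using transpose_mult[OF Am_carrier[of k \<sigma> xs] Rc] RP(1) A_sym by simp
  then have "transpose_mat Rxs = (transpose_mat Rxs * Axs) * Rxs"
    using Rc RP(1) by (metis Am_carrier assoc_mult_mat right_mult_one_mat transpose_carrier_mat)
  also have "\<dots> = Rxs" using \<open>transpose_mat Rxs * Axs = 1\<^sub>m nxs\<close> Rc by simp
  finally show ?thesis .
qed

lemma R_sym_idx: "i < nxs \<Longrightarrow> j < nxs \<Longrightarrow> Rxs $$ (i,j) = Rxs $$ (j,i)"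
  using arg_cong[OF R_sym, of "\<lambda>M. M $$ (j,i)"] RP(3) by simp

lemma sprod_R_swap:
  assumes a: "a \<in> carrier_vec nxs" and b: "b \<in> carrier_vec nxs"
  shows "a \<bullet> (Rxs *\<^sub>v b) = (Rxs *\<^sub>v a) \<bullet> b"
proof -
  have "a \<bullet> (Rxs *\<^sub>v b) = (\<Sum>i<nxs. a$i * (\<Sum>j<nxs. Rxs$$(i,j) * b$j))"
    using a b RP(3) by (auto simp: scalar_prod_def atLeast0LessThan intro!: sum.cong)
  also have "\<dots> = (\<Sum>j<nxs. (\<Sum>i<nxs. Rxs$$(j,i) * a$i) * b$j)"
  proof -
    have "(\<Sum>i<nxs. a$i * (\<Sum>j<nxs. Rxs$$(i,j) * b$j)) = (\<Sum>i<nxs. \<Sum>j<nxs. a$i * b$j * Rxs$$(j,i))"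
    proof (intro sum.cong refl)
      fix i assume i: "i \<in> {..<nxs}"
      have "a$i * (\<Sum>j<nxs. Rxs$$(i,j) * b$j) = (\<Sum>j<nxs. a$i * b$j * Rxs$$(i,j))"
        by (simp add: sum_distrib_left mult_ac)
      also have "\<dots> = (\<Sum>j<nxs. a$i * b$j * Rxs$$(j,i))"
        using i by (intro sum.cong refl) (metis R_sym_idx lessThan_iff)
      finally show "a$i * (\<Sum>j<nxs. Rxs$$(i,j) * b$j) = (\<Sum>j<nxs. a$i * b$j * Rxs$$(j,i))" .
    qed
    also have "\<dots> = (\<Sum>j<nxs. \<Sum>i<nxs. a$i * b$j * Rxs$$(j,i))" by (rule sum.swap)
    also have "\<dots> = (\<Sum>j<nxs. \<Sum>i<nxs. Rxs$$(j,i) * a$i * b$j)" by (intro sum.cong refl) (simp add: mult_ac)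
    also have "\<dots> = (\<Sum>j<nxs. (\<Sum>i<nxs. Rxs$$(j,i) * a$i) * b$j)" by (simp add: sum_distrib_right)
    finally show ?thesis .
  qed
  also have "\<dots> = (Rxs *\<^sub>v a) \<bullet> b"
    using a b RP(3) by (auto simp: scalar_prod_def atLeast0LessThan intro!: sum.cong)
  finally show ?thesis .
qed

definition alpha :: "'a \<Rightarrow> real vec" where "alpha u = Rxs *\<^sub>v kvec k xs u"

lemma alpha_carrier[simp]: "alpha u \<in> carrier_vec nxs"
  unfolding alpha_def by (rule mult_mat_vec_carrier[OF RP(3) kvec_carrier])

lemma alpha_dim[simp]: "dim_vec (alpha u) = nxs"
  using alpha_carrier[of u] by (rule carrier_vecD)

lemma A_alpha: "Axs *\<^sub>v alpha u = kvec k xs u"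
proof -
  have "Axs *\<^sub>v alpha u = (Axs * Rxs) *\<^sub>v kvec k xs u"
    unfolding alpha_def using RP(3) by (simp add: assoc_mult_mat_vec[of _ nxs nxs _ nxs])
  then show ?thesis using RP(1) by simp
qed

lemma post_mean_eq:
  assumes "length ys = nxs"
  shows "post_mean k \<sigma> xs ys u = alpha u \<bullet> vec nxs (\<lambda>i. ys ! i)"
proof (cases "xs = []")
  case True then show ?thesis using assms by (simp add: post_mean_def scalar_prod_def)
next
  case False
  then show ?thesis unfolding post_mean_def alpha_def using assms
    by (simp add: sprod_R_swap)
qed

definition pv :: "'a \<Rightarrow> real" where "pv u = k u u - kvec k xs u \<bullet> alpha u"

lemma post_var_eq: "post_var k \<sigma> xs u = pv u"
  unfolding post_var_def pv_def alpha_def by (simp add: scalar_prod_def)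

lemma quad_alpha: "alpha u \<bullet> kvec k xs u = kgram k (vexp xs (alpha u)) + \<sigma>\<^sup>2 * (alpha u \<bullet> alpha u)"
  using quad_Am(1)[OF K xsX alpha_carrier[of u], of \<sigma>] A_alpha by simp

lemma kv_alpha_comm: "kvec k xs u \<bullet> alpha u = alpha u \<bullet> kvec k xs u"
  by (rule comm_scalar_prod[of _ nxs]) auto

definition cres :: "'a \<Rightarrow> ('a \<times> real) list" where
  "cres u = [(u, 1)] @ scl (-1) (vexp xs (alpha u))"

lemma cres_centres: "u \<in> X \<Longrightarrow> set (map fst (cres u)) \<subseteq> X"
  unfolding cres_def using xsX by auto

lemma evalc_cres: "evalc (cres u) F = F u - alpha u \<bullet> vec nxs (\<lambda>i. F (xs ! i))"
proof -
  have "evalc (scl (-1) (vexp xs (alpha u))) F = - (\<Sum>i<nxs. alpha u $ i * F (xs!i))"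
    unfolding evalc_idx by (simp add: sum_negf[symmetric])
  moreover have "evalc (cres u) F = F u + evalc (scl (-1) (vexp xs (alpha u))) F"
    unfolding cres_def evalc_def by simp
  ultimately show ?thesis by (simp add: scalar_prod_def atLeast0LessThan)
qed

lemma kgram_cres_gen:
  assumes KK: "is_kernel X KK" and u: "u \<in> X"
  shows "kgram KK (cres u) = KK u u - 2 * kexp KK (vexp xs (alpha u)) u + kgram KK (vexp xs (alpha u))"
proof -
  have c1: "set (map fst [(u, 1::real)]) \<subseteq> X" using u by simp
  have c2: "set (map fst (vexp xs (alpha u))) \<subseteq> X" using xsX by simp
  show ?thesis
    unfolding cres_def kgram_ip ip_append1 ip_append2 ip_scl1 ip_scl2
    using ip_sym[OF KK c1 c2] by (simp add: kexp_ip ip_def)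
qed

lemma kexp_vexp: "kexp k (vexp xs v) u = (\<Sum>i<nxs. v$i * k u (xs!i))"
  unfolding kexp_idx by simp

lemma kexp_alpha: "kexp k (vexp xs (alpha u)) u = kvec k xs u \<bullet> alpha u"
  unfolding kexp_vexp by (simp add: scalar_prod_def atLeast0LessThan mult.commute)

lemma kgram_k_cres: "u \<in> X \<Longrightarrow> kgram k (cres u) = pv u - \<sigma>\<^sup>2 * (alpha u \<bullet> alpha u)"
  unfolding kgram_cres_gen[OF K] kexp_alpha pv_def using quad_alpha[of u] kv_alpha_comm[of u] by simp

lemma pv_nonneg: "u \<in> X \<Longrightarrow> pv u \<ge> 0"
proof -
  assume u: "u \<in> X"
  have "kgram k (cres u) \<ge> 0" by (rule kgram_nonneg[OF K cres_centres[OF u]])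
  moreover have "\<sigma>\<^sup>2 * (alpha u \<bullet> alpha u) \<ge> 0" using sprod_self_nonneg[of "alpha u"] by simp
  ultimately show ?thesis using kgram_k_cres[OF u] by linarith
qed

lemma pv_le: "pv u \<le> k u u"
proof -
  have "alpha u \<bullet> kvec k xs u \<ge> 0"
  proof -
    have "\<sigma>\<^sup>2 * (alpha u \<bullet> alpha u) \<ge> 0" using sprod_self_nonneg[of "alpha u"] by simp
    then show ?thesis using quad_Am(2)[OF K xsX alpha_carrier[of u], of \<sigma>] A_alpha by simp
  qed
  then show ?thesis unfolding pv_def using kv_alpha_comm[of u] by simp
qed

end



lemma kgram_add_kernel: "kgram (\<lambda>u v. K1 u v + K2 u v) c = kgram K1 c + kgram K2 c"
  unfolding kgram_ip ip_idx by (simp add: distrib_left sum.distrib)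

lemma kgram_smult_kernel: "kgram (\<lambda>u v. a * K u v) c = a * kgram K c"
  unfolding kgram_ip ip_idx by (simp add: sum_distrib_left mult_ac)

lemma ksig_eq: "ksig k \<sigma> = (\<lambda>u v. k u v + \<sigma>\<^sup>2 * delta u v)"
  unfolding ksig_def by (intro ext) simp

lemma delta_psd: "kgram delta c \<ge> 0"
proof -
  define m where "m = length c"
  define z where "z i = fst (c!i)" for i
  define a where "a i = snd (c!i)" for i
  define G where "G y = (\<Sum>j<m. if z j = y then a j else 0)" for y
  have "kgram delta c = (\<Sum>i<m. \<Sum>j<m. a i * a j * delta (z i) (z j))"
    unfolding kgram_ip ip_idx m_def z_def a_def ..
  also have "\<dots> = (\<Sum>i<m. a i * G (z i))"
    unfolding G_def by (intro sum.cong refl) (auto simp: sum_distrib_left delta_def intro!: sum.cong)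
  also have "\<dots> = (\<Sum>y\<in>z ` {..<m}. \<Sum>i\<in>{i\<in>{..<m}. z i = y}. a i * G (z i))"
    by (rule sum.image_gen) simp
  also have "\<dots> = (\<Sum>y\<in>z ` {..<m}. G y * G y)"
  proof (intro sum.cong refl)
    fix y
    have "(\<Sum>i\<in>{i\<in>{..<m}. z i = y}. a i * G (z i)) = (\<Sum>i\<in>{i\<in>{..<m}. z i = y}. a i * G y)"
      by (intro sum.cong) auto
    also have "\<dots> = G y * (\<Sum>i\<in>{i\<in>{..<m}. z i = y}. a i)" by (simp add: sum_distrib_left mult_ac)
    also have "(\<Sum>i\<in>{i\<in>{..<m}. z i = y}. a i) = G y"
      unfolding G_def by (rule sum.inter_filter) simp
    finally show "(\<Sum>i\<in>{i\<in>{..<m}. z i = y}. a i * G (z i)) = G y * G y" .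
  qed
  also have "\<dots> \<ge> 0" by (intro sum_nonneg) simp
  finally show ?thesis .
qed

lemma delta_sym: "delta u v = delta v u" unfolding delta_def by auto

lemma sum_mult_delta: "j < (m::nat) \<Longrightarrow> (\<Sum>i<m. f i * (if i = j then 1 else 0)) = (f j :: real)"
proof -
  assume j: "j < m"
  have "(\<Sum>i<m. f i * (if i = j then 1 else 0)) = (\<Sum>i\<in>{..<m}. if i = j then f i else 0)"
    by (intro sum.cong) auto
  also have "\<dots> = f j" using sum.delta[of "{..<m}" j f] j by simp
  finally show ?thesis .
qed

lemma delta_kernel: "is_kernel X (\<lambda>u v. c\<^sup>2 * delta u v)"
proof -
  have "c\<^sup>2 * kgram delta ps \<ge> 0" for ps using delta_psd[of ps] by simp
  then show ?thesis unfolding is_kernel_def kgram_smult_kernel using delta_sym by auto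
qed

lemma ksig_kernel: "is_kernel X k \<Longrightarrow> is_kernel X (ksig k \<sigma>)"
proof -
  assume K: "is_kernel X k"
  have "kgram k ps + \<sigma>\<^sup>2 * kgram delta ps \<ge> 0" if "set (map fst ps) \<subseteq> X" for ps
  proof -
    have "kgram k ps \<ge> 0" using K that unfolding is_kernel_def by blast
    moreover have "\<sigma>\<^sup>2 * kgram delta ps \<ge> 0" using delta_psd[of ps] by simp
    ultimately show ?thesis by linarith
  qed
  moreover have "\<forall>x\<in>X. \<forall>y\<in>X. k x y = k y x" using K unfolding is_kernel_def by blast
  ultimately show ?thesis unfolding is_kernel_def ksig_eq kgram_add_kernel kgram_smult_kernel
    using delta_sym by auto
qed

context
  fixes X :: "'a set" and k :: "'a \<Rightarrow> 'a \<Rightarrow> real" and \<sigma> :: real and xs :: "'a list"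
  assumes K: "is_kernel X k" and xsX: "set xs \<subseteq> X" and sp: "\<sigma> > 0" and dxs: "distinct xs"
begin

abbreviation "nE \<equiv> length xs"
abbreviation "RE \<equiv> reg_inv k \<sigma> xs"
abbreviation "al \<equiv> alpha k \<sigma> xs"

lemmas RP' = reg_inv_props[OF K xsX sp]

lemma xsin': "i < nE \<Longrightarrow> xs ! i \<in> X" using xsX by auto
lemma ksym': "a \<in> X \<Longrightarrow> b \<in> X \<Longrightarrow> k a b = k b a" using K unfolding is_kernel_def by auto

definition dsum :: "'a \<Rightarrow> real" where "dsum u = (\<Sum>i<nE. al u $ i * delta u (xs ! i))"

lemma kgram_delta_cres:
  assumes u: "u \<in> X"
  shows "kgram (\<lambda>a b. \<sigma>\<^sup>2 * delta a b) (cres k \<sigma> xs u) = \<sigma>\<^sup>2 * (1 - 2 * dsum u + al u \<bullet> al u)"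
proof -
  have e1: "kexp (\<lambda>a b. \<sigma>\<^sup>2 * delta a b) (vexp xs (al u)) u = \<sigma>\<^sup>2 * dsum u"
    unfolding kexp_idx dsum_def by (simp add: sum_distrib_left mult_ac)
  have e2: "kgram (\<lambda>a b. \<sigma>\<^sup>2 * delta a b) (vexp xs (al u)) = \<sigma>\<^sup>2 * (al u \<bullet> al u)"
  proof -
    have "kgram (\<lambda>a b. \<sigma>\<^sup>2 * delta a b) (vexp xs (al u)) = \<sigma>\<^sup>2 * (\<Sum>i<nE. \<Sum>j<nE. al u $ i * al u $ j * delta (xs!i) (xs!j))"
      unfolding kgram_smult_kernel kgram_ip ip_idx by simp
    also have "(\<Sum>i<nE. \<Sum>j<nE. al u $ i * al u $ j * delta (xs!i) (xs!j)) = (\<Sum>i<nE. al u $ i * al u $ i)"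
    proof (intro sum.cong refl)
      fix i assume i: "i \<in> {..<nE}"
      have "(\<Sum>j<nE. al u $ i * al u $ j * delta (xs!i) (xs!j)) = (\<Sum>j<nE. if j = i then al u $ i * al u $ i else 0)"
        using i dxs by (intro sum.cong refl) (auto simp: delta_def nth_eq_iff_index_eq)
      also have "\<dots> = al u $ i * al u $ i" using i by simp
      finally show "(\<Sum>j<nE. al u $ i * al u $ j * delta (xs!i) (xs!j)) = al u $ i * al u $ i" .
    qed
    finally show ?thesis by (simp add: scalar_prod_def atLeast0LessThan alpha_dim[OF K xsX sp])
  qed
  show ?thesis
    unfolding kgram_cres_gen[OF K xsX sp delta_kernel u] e1 e2 by (simp add: delta_def algebra_simps)
qed

lemma kgram_ksig_cres:
  assumes u: "u \<in> X"
  shows "kgram (ksig k \<sigma>) (cres k \<sigma> xs u) = pv k \<sigma> xs u + \<sigma>\<^sup>2 - 2 * \<sigma>\<^sup>2 * dsum u"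
  unfolding ksig_eq kgram_add_kernel kgram_delta_cres[OF u] kgram_k_cres[OF K xsX sp u]
  by (simp add: algebra_simps)

lemma Rjj_bound:
  assumes j: "j < nE"
  shows "\<sigma>\<^sup>2 * RE $$ (j,j) \<le> 1"
proof -
  define e where "e = (unit_vec nE j :: real vec)"
  define w where "w = RE *\<^sub>v e"
  have ec: "e \<in> carrier_vec nE" unfolding e_def by simp
  have wc: "w \<in> carrier_vec nE" unfolding w_def by (rule mult_mat_vec_carrier[OF RP'(3) ec])
  have Aw: "Am k \<sigma> xs *\<^sub>v w = e"
  proof -
    have "Am k \<sigma> xs *\<^sub>v w = (Am k \<sigma> xs * RE) *\<^sub>v e"
      unfolding w_def by (rule assoc_mult_mat_vec[symmetric, OF Am_carrier RP'(3) ec])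
    then show ?thesis using RP'(1) ec by simp
  qed
  have wj: "w $ j = RE $$ (j,j)" unfolding w_def e_def using j RP'(3)
    by (simp add: scalar_prod_def atLeast0LessThan sum_mult_delta)
  have "w \<bullet> e = w $ j" unfolding e_def using j wc
    by (simp add: scalar_prod_def atLeast0LessThan sum_mult_delta)
  then have q: "w \<bullet> (Am k \<sigma> xs *\<^sub>v w) = RE $$ (j,j)" using Aw wj by simp
  have "\<sigma>\<^sup>2 * (w \<bullet> w) \<le> RE $$ (j,j)" using quad_Am(2)[OF K xsX wc, of \<sigma>] q by simp
  moreover have "w $ j * w $ j \<le> w \<bullet> w"
    unfolding scalar_prod_def using j wc by (intro member_le_sum) auto
  ultimately have "\<sigma>\<^sup>2 * (RE $$ (j,j) * RE $$ (j,j)) \<le> \<sigma>\<^sup>2 * (w \<bullet> w)" using wj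
    by (intro mult_left_mono) auto
  with \<open>\<sigma>\<^sup>2 * (w \<bullet> w) \<le> RE $$ (j,j)\<close>
  have r: "(\<sigma>\<^sup>2 * RE $$ (j,j)) * RE $$ (j,j) \<le> 1 * RE $$ (j,j)" by (simp add: mult.assoc)
  show ?thesis
  proof (cases "RE $$ (j,j) > 0")
    case True then show ?thesis using r by (rule mult_right_le_imp_le[rotated])
  next
    case False
    then have "\<sigma>\<^sup>2 * RE $$ (j,j) \<le> 0" by (simp add: mult_nonneg_nonpos)
    then show ?thesis by linarith
  qed
qed

lemma alpha_at_node:
  assumes j: "j < nE"
  shows "al (xs ! j) $ j = 1 - \<sigma>\<^sup>2 * RE $$ (j,j)"
proof -
  have RA: "(RE * Am k \<sigma> xs) $$ (j,j) = 1" using RP'(2) j by simp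
  have "(RE * Am k \<sigma> xs) $$ (j,j) = (\<Sum>l<nE. RE $$ (j,l) * (k (xs!l) (xs!j) + (if l = j then \<sigma>\<^sup>2 else 0)))"
    using j RP'(3) by (simp add: scalar_prod_def atLeast0LessThan Am_index)
  also have "\<dots> = (\<Sum>l<nE. RE $$ (j,l) * k (xs!j) (xs!l)) + \<sigma>\<^sup>2 * RE $$ (j,j)"
  proof -
    have "(\<Sum>l<nE. RE $$ (j,l) * (k (xs!l) (xs!j) + (if l = j then \<sigma>\<^sup>2 else 0)))
        = (\<Sum>l<nE. RE $$ (j,l) * k (xs!j) (xs!l)) + (\<Sum>l<nE. if l = j then RE $$ (j,l) * \<sigma>\<^sup>2 else 0)"
    proof (subst sum.distrib[symmetric], intro sum.cong refl)
      fix l assume l: "l \<in> {..<nE}"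
      have "k (xs!l) (xs!j) = k (xs!j) (xs!l)" using ksym'[OF xsin'[of l] xsin'[OF j]] l by simp
      then show "RE $$ (j,l) * (k (xs!l) (xs!j) + (if l = j then \<sigma>\<^sup>2 else 0))
        = RE $$ (j,l) * k (xs!j) (xs!l) + (if l = j then RE $$ (j,l) * \<sigma>\<^sup>2 else 0)"
        by (simp add: distrib_left)
    qed
    then show ?thesis using j by (simp add: mult.commute)
  qed
  also have "(\<Sum>l<nE. RE $$ (j,l) * k (xs!j) (xs!l)) = al (xs ! j) $ j"
    unfolding Submission.alpha_def[OF K xsX sp] using j carrier_matD[OF RP'(3)] by (simp add: scalar_prod_def atLeast0LessThan)
  finally show ?thesis using RA by simp
qed

lemma dsum_nonneg:
  assumes u: "u \<in> X"
  shows "dsum u \<ge> 0"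
proof (cases "u \<in> set xs")
  case False
  then have "\<And>i. i < nE \<Longrightarrow> delta u (xs!i) = 0" by (auto simp: delta_def)
  then show ?thesis unfolding dsum_def by simp
next
  case True
  then obtain j where j: "j < nE" "u = xs ! j" by (auto simp: in_set_conv_nth)
  have "dsum u = (\<Sum>i<nE. if i = j then al u $ j else 0)"
    unfolding dsum_def using j dxs by (intro sum.cong refl) (auto simp: delta_def nth_eq_iff_index_eq)
  also have "\<dots> = al u $ j" using j by simp
  also have "\<dots> = 1 - \<sigma>\<^sup>2 * RE $$ (j,j)" using alpha_at_node[OF j(1)] j(2) by simp
  finally show ?thesis using Rjj_bound[OF j(1)] by simp
qed

lemma kgram_ksig_cres_le:
  assumes u: "u \<in> X"
  shows "kgram (ksig k \<sigma>) (cres k \<sigma> xs u) \<le> pv k \<sigma> xs u + \<sigma>\<^sup>2"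
  using kgram_ksig_cres[OF u] dsum_nonneg[OF u] by (simp add: mult_nonneg_nonneg)

end



lemma det_Am_snoc:
  assumes K: "is_kernel X k" and xsX: "set xs \<subseteq> X" and u: "u \<in> X" and sp: "\<sigma> > 0"
  shows "det (Am k \<sigma> (xs @ [u])) = det (Am k \<sigma> xs) * (\<sigma>\<^sup>2 + pv k \<sigma> xs u)"
proof -
  define n where "n = length xs"
  define Aa where "Aa = Am k \<sigma> xs"
  define R where "R = reg_inv k \<sigma> xs"
  define B where "B = mat n 1 (\<lambda>(i,j). k (xs!i) u)"
  define Bt where "Bt = mat 1 n (\<lambda>(i,j). k u (xs!j))"
  define C where "C = mat 1 1 (\<lambda>_. k u u + \<sigma>\<^sup>2)"
  define W where "W = R * B"
  define D where "D = C - Bt * W"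
  define M1 where "M1 = four_block_mat Aa (0\<^sub>m n 1) Bt (1\<^sub>m 1)"
  define M2 where "M2 = four_block_mat (1\<^sub>m n) W (0\<^sub>m 1 n) D"
  note RP = reg_inv_props[OF K xsX sp, folded R_def n_def]
  have Aac: "Aa \<in> carrier_mat n n" unfolding Aa_def n_def by simp
  have Bc: "B \<in> carrier_mat n 1" unfolding B_def by simp
  have Btc: "Bt \<in> carrier_mat 1 n" unfolding Bt_def by simp
  have Cc: "C \<in> carrier_mat 1 1" unfolding C_def by simp
  have Wc: "W \<in> carrier_mat n 1" unfolding W_def using RP(3) Bc by simp
  have Dc: "D \<in> carrier_mat 1 1" unfolding D_def using Cc mult_carrier_mat[OF Btc Wc] by (metis minus_carrier_mat)
  have ksy: "a \<in> X \<Longrightarrow> b \<in> X \<Longrightarrow> k a b = k b a" for a b using K unfolding is_kernel_def by auto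
  have xin: "i < n \<Longrightarrow> xs ! i \<in> X" for i using xsX unfolding n_def by auto
  have M: "Am k \<sigma> (xs @ [u]) = four_block_mat Aa B Bt C"
  proof (rule eq_matI)
    fix i j assume "i < dim_row (four_block_mat Aa B Bt C)" "j < dim_col (four_block_mat Aa B Bt C)"
    then have ij: "i < n + 1" "j < n + 1" using Aac Cc by auto
    have nth: "(xs @ [u]) ! i = (if i < n then xs ! i else u)" if "i < n + 1" for i
      using that unfolding n_def by (auto simp: nth_append)
    show "Am k \<sigma> (xs @ [u]) $$ (i, j) = four_block_mat Aa B Bt C $$ (i, j)"
      using ij Aac Bc Btc Cc
      by (subst Am_index) (auto simp: nth n_def[symmetric] Aa_def B_def Bt_def C_def Am_index)
  qed (use Aac Cc n_def in auto)
  have "M1 * M2 = four_block_mat (Aa * 1\<^sub>m n + 0\<^sub>m n 1 * 0\<^sub>m 1 n) (Aa * W + 0\<^sub>m n 1 * D)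
                     (Bt * 1\<^sub>m n + 1\<^sub>m 1 * 0\<^sub>m 1 n) (Bt * W + 1\<^sub>m 1 * D)"
    unfolding M1_def M2_def
    by (rule mult_four_block_mat[OF Aac _ Btc _ _ Wc _ Dc]) auto
  also have "Aa * 1\<^sub>m n + 0\<^sub>m n 1 * 0\<^sub>m 1 n = Aa" using Aac by simp
  also have "Aa * W + 0\<^sub>m n 1 * D = B"
  proof -
    have "Aa * W = (Aa * R) * B" unfolding W_def using Aac RP(3) Bc by simp
    also have "\<dots> = B" using RP(1) Bc unfolding Aa_def n_def by simp
    finally show ?thesis using Bc Dc by simp
  qed
  also have "Bt * 1\<^sub>m n + 1\<^sub>m 1 * 0\<^sub>m 1 n = Bt" using Btc by simp
  also have "Bt * W + 1\<^sub>m 1 * D = C"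
    by (rule eq_matI) (use Btc Wc Cc Dc in \<open>auto simp: D_def\<close>)
  finally have prod: "M1 * M2 = four_block_mat Aa B Bt C" .
  have dM1: "det M1 = det Aa"
    unfolding M1_def by (subst det_four_block_mat_upper_right_zero[OF Aac refl Btc]) auto
  have dM2: "det M2 = D $$ (0,0)"
    unfolding M2_def by (subst det_four_block_mat_lower_left_zero[OF _ Wc refl Dc]) (auto simp: det_single[OF Dc])
  have colB: "col B 0 = kvec k xs u"
    by (rule eq_vecI) (auto simp: B_def kvec_def n_def ksy[OF xin u])
  have rowBt: "row Bt 0 = kvec k xs u"
    by (rule eq_vecI) (auto simp: Bt_def kvec_def n_def)
  have colW: "col W 0 = alpha k \<sigma> xs u"
  proof (rule eq_vecI)
    fix i assume "i < dim_vec (alpha k \<sigma> xs u)"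
    then have i: "i < n" using alpha_dim[OF K xsX sp] n_def by simp
    then show "col W 0 $ i = alpha k \<sigma> xs u $ i"
      unfolding W_def Submission.alpha_def[OF K xsX sp] R_def[symmetric] using RP(3) Bc colB i
      by (simp add: n_def)
  qed (use Wc alpha_dim[OF K xsX sp] n_def in auto)
  have D00: "D $$ (0,0) = \<sigma>\<^sup>2 + pv k \<sigma> xs u"
    unfolding D_def Submission.pv_def[OF K xsX sp] using Cc Btc Wc
    by (simp add: C_def rowBt colW)
  have "det (Am k \<sigma> (xs @ [u])) = det (M1 * M2)" unfolding M prod ..
  also have "\<dots> = det M1 * det M2"
    by (rule det_mult[of _ "n+1"]) (unfold M1_def M2_def, use Aac Btc Wc Dc in auto)
  finally show ?thesis unfolding dM1 dM2 D00 Aa_def .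
qed

lemma Am_Nil: "Am k \<sigma> [] = 1\<^sub>m 0"
  by (rule eq_matI) auto

lemma det_Am_prod:
  assumes K: "is_kernel X k" and ys: "set ys \<subseteq> X" and sp: "\<sigma> > 0"
  shows "det (Am k \<sigma> ys) = (\<Prod>i<length ys. \<sigma>\<^sup>2 + pv k \<sigma> (take i ys) (ys ! i))"
  using ys
proof (induction ys rule: rev_induct)
  case Nil
  then show ?case by (simp add: Am_Nil)
next
  case (snoc y ys)
  have ys: "set ys \<subseteq> X" and y: "y \<in> X" using snoc.prems by auto
  have "det (Am k \<sigma> (ys @ [y])) = det (Am k \<sigma> ys) * (\<sigma>\<^sup>2 + pv k \<sigma> ys y)"
    by (rule det_Am_snoc[OF K ys y sp])
  also have "det (Am k \<sigma> ys) = (\<Prod>i<length ys. \<sigma>\<^sup>2 + pv k \<sigma> (take i (ys @ [y])) ((ys @ [y]) ! i))"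
    unfolding snoc.IH[OF ys] by (intro prod.cong refl) (auto simp: nth_append)
  finally show ?case by (simp add: prod.lessThan_Suc)
qed

lemma det_info:
  assumes sp: "\<sigma> > 0"
  shows "det (1\<^sub>m (length ys) + (1 / \<sigma>\<^sup>2) \<cdot>\<^sub>m gram_mat k ys) = (1 / \<sigma>\<^sup>2) ^ length ys * det (Am k \<sigma> ys)"
proof -
  have "1\<^sub>m (length ys) + (1 / \<sigma>\<^sup>2) \<cdot>\<^sub>m gram_mat k ys = (1 / \<sigma>\<^sup>2) \<cdot>\<^sub>m Am k \<sigma> ys"
  proof (rule eq_matI)
    fix i j assume "i < dim_row ((1 / \<sigma>\<^sup>2) \<cdot>\<^sub>m Am k \<sigma> ys)" "j < dim_col ((1 / \<sigma>\<^sup>2) \<cdot>\<^sub>m Am k \<sigma> ys)"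
    then have ij: "i < length ys" "j < length ys" by auto
    have s2: "1 / \<sigma>\<^sup>2 * \<sigma>\<^sup>2 = 1" using sp by simp
    show "(1\<^sub>m (length ys) + (1 / \<sigma>\<^sup>2) \<cdot>\<^sub>m gram_mat k ys) $$ (i, j) = ((1 / \<sigma>\<^sup>2) \<cdot>\<^sub>m Am k \<sigma> ys) $$ (i, j)"
      using ij s2 by (cases "i = j") (auto simp: Am_index distrib_left)
  qed auto
  then show ?thesis by simp
qed

lemma ln_det_info:
  assumes K: "is_kernel X k" and ys: "set ys \<subseteq> X" and sp: "\<sigma> > 0"
  shows "ln (det (1\<^sub>m (length ys) + (1 / \<sigma>\<^sup>2) \<cdot>\<^sub>m gram_mat k ys))
     = (\<Sum>i<length ys. ln (1 + pv k \<sigma> (take i ys) (ys ! i) / \<sigma>\<^sup>2))"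
proof -
  have pvn: "pv k \<sigma> (take i ys) (ys ! i) \<ge> 0" if "i < length ys" for i
  proof -
    have "set (take i ys) \<subseteq> X" using ys by (meson in_set_takeD subsetD subsetI)
    moreover have "ys ! i \<in> X" using ys that by auto
    ultimately show ?thesis by (rule pv_nonneg[OF K _ sp])
  qed
  have "det (1\<^sub>m (length ys) + (1 / \<sigma>\<^sup>2) \<cdot>\<^sub>m gram_mat k ys)
      = (\<Prod>i<length ys. 1 + pv k \<sigma> (take i ys) (ys ! i) / \<sigma>\<^sup>2)"
  proof -
    have pe: "(1 / \<sigma>\<^sup>2) ^ length ys = (\<Prod>i<length ys. 1 / \<sigma>\<^sup>2)" by simp
    have "(1 / \<sigma>\<^sup>2) ^ length ys * (\<Prod>i<length ys. \<sigma>\<^sup>2 + pv k \<sigma> (take i ys) (ys ! i))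
       = (\<Prod>i<length ys. 1 / \<sigma>\<^sup>2 * (\<sigma>\<^sup>2 + pv k \<sigma> (take i ys) (ys ! i)))"
      by (simp only: pe prod.distrib)
    also have "\<dots> = (\<Prod>i<length ys. 1 + pv k \<sigma> (take i ys) (ys ! i) / \<sigma>\<^sup>2)"
      using sp by (intro prod.cong refl) (simp add: field_simps)
    finally show ?thesis unfolding det_info[OF sp] det_Am_prod[OF K ys sp] .
  qed
  also have "ln \<dots> = (\<Sum>i<length ys. ln (1 + pv k \<sigma> (take i ys) (ys ! i) / \<sigma>\<^sup>2))"
  proof (rule ln_prod)
    fix i assume "i \<in> {..<length ys}"
    then have "pv k \<sigma> (take i ys) (ys ! i) / \<sigma>\<^sup>2 \<ge> 0" using pvn by simp
    then show "1 + pv k \<sigma> (take i ys) (ys ! i) / \<sigma>\<^sup>2 \<noteq> 0" by linarith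
  qed simp
  finally show ?thesis by simp
qed

lemma log_ineq:
  fixes s B \<sigma> :: real
  assumes sp: "\<sigma> > 0" and B: "B > 0" and s0: "0 \<le> s" and sB: "s \<le> B"
  shows "s \<le> (B / ln (1 + B / \<sigma>\<^sup>2)) * ln (1 + s / \<sigma>\<^sup>2)"
proof -
  define Z where "Z = B / \<sigma>\<^sup>2"
  define l where "l = s / B"
  have Z: "Z > 0" unfolding Z_def using sp B by simp
  have l: "0 \<le> l" "l \<le> 1" unfolding l_def using s0 sB B by auto
  have L: "ln (1 + Z) > 0" using Z by simp
  have "exp ((1 - l) *\<^sub>R 0 + l *\<^sub>R ln (1 + Z)) \<le> (1 - l) * exp 0 + l * exp (ln (1 + Z))"
    by (rule convex_onD[OF exp_convex]) (use l in auto)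
  then have "exp (l * ln (1 + Z)) \<le> 1 + l * Z" using Z by (simp add: algebra_simps)
  then have "l * ln (1 + Z) \<le> ln (1 + l * Z)"
  proof -
    assume a: "exp (l * ln (1 + Z)) \<le> 1 + l * Z"
    have "l * Z \<ge> 0" using Z l by simp
    then have p: "1 + l * Z > 0" by linarith
    have "ln (exp (l * ln (1 + Z))) \<le> ln (1 + l * Z)" using a p by (subst ln_le_cancel_iff) auto
    then show ?thesis by simp
  qed
  moreover have "l * Z = s / \<sigma>\<^sup>2" unfolding l_def Z_def using B by simp
  ultimately have "s / B * ln (1 + Z) \<le> ln (1 + s / \<sigma>\<^sup>2)" unfolding l_def by simp
  then have "s * ln (1 + Z) \<le> B * ln (1 + s / \<sigma>\<^sup>2)" using B by (simp add: field_simps)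
  then show ?thesis using L unfolding Z_def by (simp add: field_simps)
qed




lemma evalc_cong: "(\<And>z. z \<in> set (map fst q) \<Longrightarrow> F z = G z) \<Longrightarrow> evalc q F = evalc q G"
  unfolding evalc_idx
proof (intro sum.cong refl)
  assume a: "\<And>z. z \<in> set (map fst q) \<Longrightarrow> F z = G z"
  fix i assume "i \<in> {..<length q}"
  then have "fst (q!i) \<in> set (map fst q)" using nth_mem[of i q] by force
  then show "snd (q ! i) * F (fst (q ! i)) = snd (q ! i) * G (fst (q ! i))" using a by simp
qed

definition interp :: "('a \<Rightarrow> 'a \<Rightarrow> real) \<Rightarrow> real \<Rightarrow> ('a \<Rightarrow> real) \<Rightarrow> 'a list \<Rightarrow> ('a \<times> real) list" where
  "interp k \<sigma> F zs = vexp zs (reg_inv k \<sigma> zs *\<^sub>v vec (length zs) (\<lambda>i. F (zs ! i)))"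

lemma interp_centres[simp]: "map fst (interp k \<sigma> F zs) = zs"
  unfolding interp_def by simp

lemma interp_eval:
  assumes K: "is_kernel X k" and zs: "set zs \<subseteq> X" and sp: "\<sigma> > 0" and d: "distinct zs"
    and j: "j < length zs"
  shows "kexp (ksig k \<sigma>) (interp k \<sigma> F zs) (zs ! j) = F (zs ! j)"
proof -
  define n where "n = length zs"
  define Fv where "Fv = vec n (\<lambda>i. F (zs ! i))"
  define c where "c = reg_inv k \<sigma> zs *\<^sub>v Fv"
  note RP = reg_inv_props[OF K zs sp, folded n_def]
  have Fc: "Fv \<in> carrier_vec n" unfolding Fv_def by simp
  have cc: "c \<in> carrier_vec n" unfolding c_def by (rule mult_mat_vec_carrier[OF RP(3) Fc])
  have Ac: "Am k \<sigma> zs *\<^sub>v c = Fv"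
  proof -
    have "Am k \<sigma> zs *\<^sub>v c = (Am k \<sigma> zs * reg_inv k \<sigma> zs) *\<^sub>v Fv"
      unfolding c_def by (rule assoc_mult_mat_vec[symmetric, OF Am_carrier[of k \<sigma> zs, folded n_def] RP(3) Fc])
    then show ?thesis using RP(1) Fc by simp
  qed
  have jn: "j < n" using j n_def by simp
  have "kexp (ksig k \<sigma>) (interp k \<sigma> F zs) (zs ! j) = (\<Sum>i<n. c$i * ksig k \<sigma> (zs!j) (zs!i))"
    unfolding interp_def kexp_idx n_def[symmetric] c_def[symmetric] Fv_def[symmetric] by (simp add: n_def)
  also have "\<dots> = (\<Sum>i<n. Am k \<sigma> zs $$ (j,i) * c$i)"
    using jn d by (intro sum.cong refl) (auto simp: Am_index n_def ksig_def delta_def nth_eq_iff_index_eq)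
  also have "\<dots> = (Am k \<sigma> zs *\<^sub>v c) $ j"
    using jn cc by (simp add: n_def scalar_prod_def atLeast0LessThan)
  also have "\<dots> = F (zs ! j)" using Ac jn unfolding Fv_def by simp
  finally show ?thesis .
qed

context
  fixes X :: "'a set" and k :: "'a \<Rightarrow> 'a \<Rightarrow> real" and \<sigma> :: real and f g h :: "'a \<Rightarrow> real"
  assumes K: "is_kernel X k" and sp: "\<sigma> > 0" and fin: "in_rkhs X k f"
    and gin: "in_rkhs X (\<lambda>u v. \<sigma>\<^sup>2 * delta u v) g" and hdef: "h = (\<lambda>u. f u + g u)"
begin

abbreviation "KS \<equiv> ksig k \<sigma>"
lemma KSk: "is_kernel X KS" by (rule ksig_kernel[OF K])

definition lst :: "'a set \<Rightarrow> 'a list" where "lst S = (SOME zs. set zs = S \<and> distinct zs)"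

lemma lst: "finite S \<Longrightarrow> set (lst S) = S \<and> distinct (lst S)"
  unfolding lst_def by (rule someI_ex) (rule finite_distinct_list)

definition ip_S :: "'a set \<Rightarrow> ('a \<times> real) list" where "ip_S S = interp k \<sigma> h (lst S)"
definition V :: "'a set \<Rightarrow> real" where "V S = kgram KS (ip_S S)"

lemma ipS_centres: "finite S \<Longrightarrow> set (map fst (ip_S S)) = S"
  unfolding ip_S_def using lst by simp

lemma ipS_eval: "finite S \<Longrightarrow> S \<subseteq> X \<Longrightarrow> x \<in> S \<Longrightarrow> kexp KS (ip_S S) x = h x"
proof -
  assume S: "finite S" "S \<subseteq> X" "x \<in> S"
  then obtain j where j: "j < length (lst S)" "lst S ! j = x" using lst[OF S(1)] by (metis in_set_conv_nth)
  show ?thesis unfolding ip_S_def using interp_eval[OF K _ sp _ j(1), of h] lst[OF S(1)] S j by auto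
qed

lemma ip_ipS: "finite S \<Longrightarrow> S \<subseteq> X \<Longrightarrow> set (map fst q) \<subseteq> S \<Longrightarrow> ip KS q (ip_S S) = evalc q h"
  unfolding evalc_kexp[symmetric] by (rule evalc_cong) (use ipS_eval in auto)

lemma V_eq: "finite S \<Longrightarrow> S \<subseteq> X \<Longrightarrow> V S = evalc (ip_S S) h"
proof -
  assume S: "finite S" "S \<subseteq> X"
  have "set (map fst (ip_S S)) \<subseteq> S" using ipS_centres[OF S(1)] by simp
  then show ?thesis unfolding V_def kgram_ip by (rule ip_ipS[OF S])
qed

lemma V_diff:
  assumes T: "finite T" "T \<subseteq> X" and ST: "S \<subseteq> T"
  shows "kgram KS (kdiff (ip_S T) (ip_S S)) = V T - V S"
proof -
  have S: "finite S" "S \<subseteq> X" using T ST finite_subset by auto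
  have cT: "set (map fst (ip_S T)) \<subseteq> X" using ipS_centres[OF T(1)] T(2) by simp
  have cS: "set (map fst (ip_S S)) \<subseteq> X" using ipS_centres[OF S(1)] S(2) by simp
  have "ip KS (ip_S T) (ip_S S) = ip KS (ip_S S) (ip_S T)" by (rule ip_sym[OF KSk cT cS])
  also have "\<dots> = evalc (ip_S S) h" by (rule ip_ipS[OF T]) (use ipS_centres S ST in auto)
  also have "\<dots> = V S" using V_eq S by simp
  finally show ?thesis unfolding kgram_kdiff[OF KSk cT cS] V_def by simp
qed

lemma V_mono: "finite T \<Longrightarrow> T \<subseteq> X \<Longrightarrow> S \<subseteq> T \<Longrightarrow> V S \<le> V T"
proof -
  assume a: "finite T" "T \<subseteq> X" "S \<subseteq> T"
  have "set (map fst (kdiff (ip_S T) (ip_S S))) \<subseteq> X"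
  proof -
    have fS: "finite S" using a finite_subset by auto
    show ?thesis unfolding kdiff_negl using ipS_centres[OF a(1)] ipS_centres[OF fS] a by auto
  qed
  then have "kgram KS (kdiff (ip_S T) (ip_S S)) \<ge> 0" by (rule kgram_nonneg[OF KSk])
  then show ?thesis using V_diff[OF a] by simp
qed

definition Mb :: real where "Mb = (rkhs_norm X k f + rkhs_norm X (\<lambda>u v. \<sigma>\<^sup>2 * delta u v) g)\<^sup>2"

lemma V_bound: "finite S \<Longrightarrow> S \<subseteq> X \<Longrightarrow> V S \<le> Mb"
proof -
  assume S: "finite S" "S \<subseteq> X"
  define p where "p = ip_S S"
  have pc: "set (map fst p) \<subseteq> X" unfolding p_def using ipS_centres S by auto
  define a where "a = rkhs_norm X k f"
  define b where "b = rkhs_norm X (\<lambda>u v. \<sigma>\<^sup>2 * delta u v) g"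
  have a0: "a \<ge> 0" unfolding a_def by (rule rkhs_norm_props(1)[OF K fin])
  have b0: "b \<ge> 0" unfolding b_def by (rule rkhs_norm_props(1)[OF delta_kernel gin])
  have x0: "kgram k p \<ge> 0" by (rule kgram_nonneg[OF K pc])
  have y0: "kgram (\<lambda>u v. \<sigma>\<^sup>2 * delta u v) p \<ge> 0" by (rule kgram_nonneg[OF delta_kernel pc])
  have Vs: "V S = kgram k p + kgram (\<lambda>u v. \<sigma>\<^sup>2 * delta u v) p"
    unfolding V_def p_def ksig_eq kgram_add_kernel ..
  have "V S = evalc p f + evalc p g" using V_eq[OF S] unfolding p_def hdef evalc_add .
  also have "\<dots> \<le> \<bar>evalc p f\<bar> + \<bar>evalc p g\<bar>" by simp
  also have "\<dots> \<le> a * sqrt (kgram k p) + b * sqrt (kgram (\<lambda>u v. \<sigma>\<^sup>2 * delta u v) p)"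
    using rkhs_norm_props(2)[OF K fin pc] rkhs_norm_props(2)[OF delta_kernel gin pc]
    unfolding a_def b_def by linarith
  also have "\<dots> \<le> a * sqrt (V S) + b * sqrt (V S)"
    unfolding Vs using a0 b0 x0 y0
    by (intro add_mono mult_left_mono real_sqrt_le_mono) auto
  finally have v: "V S \<le> (a + b) * sqrt (V S)" by (simp add: algebra_simps)
  have V0: "V S \<ge> 0" using Vs x0 y0 by simp
  have "sqrt (V S) \<le> a + b"
  proof (cases "V S = 0")
    case True then show ?thesis using a0 b0 by simp
  next
    case False
    then have "sqrt (V S) > 0" using V0 by simp
    moreover have "sqrt (V S) * sqrt (V S) \<le> (a + b) * sqrt (V S)" using v V0 by simp
    ultimately show ?thesis by (meson mult_right_le_imp_le)
  qed
  then have "(sqrt (V S))\<^sup>2 \<le> (a + b)\<^sup>2" using V0 by (intro power_mono) auto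
  then show ?thesis unfolding Mb_def a_def[symmetric] b_def[symmetric] using V0 by simp
qed

definition Fam :: "real set" where "Fam = V ` {S. finite S \<and> S \<subseteq> X}"
definition Ms :: real where "Ms = Sup Fam"

lemma Fam_ne: "Fam \<noteq> {}" unfolding Fam_def by auto
lemma Fam_bdd: "bdd_above Fam" unfolding Fam_def using V_bound by (intro bdd_aboveI[of _ Mb]) auto
lemma V_le_Ms: "finite S \<Longrightarrow> S \<subseteq> X \<Longrightarrow> V S \<le> Ms"
  unfolding Ms_def by (rule cSup_upper[OF _ Fam_bdd]) (auto simp: Fam_def)

lemma exists_near: "\<exists>S. finite S \<and> S \<subseteq> X \<and> Ms - inverse (real (Suc n)) < V S"
proof -
  have "Ms - inverse (real (Suc n)) < Sup Fam" unfolding Ms_def by simp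
  then obtain v where "v \<in> Fam" "Ms - inverse (real (Suc n)) < v"
    using less_cSup_iff[OF Fam_ne Fam_bdd] by blast
  then show ?thesis unfolding Fam_def by auto
qed

definition Sn :: "nat \<Rightarrow> 'a set" where
  "Sn n = (SOME S. finite S \<and> S \<subseteq> X \<and> Ms - inverse (real (Suc n)) < V S)"

lemma Sn: "finite (Sn n) \<and> Sn n \<subseteq> X \<and> Ms - inverse (real (Suc n)) < V (Sn n)"
  unfolding Sn_def by (rule someI_ex[OF exists_near])

definition U :: "nat \<Rightarrow> 'a set" where "U n = (\<Union>i\<le>n. Sn i)"

lemma U_fin: "finite (U n)" unfolding U_def using Sn by auto
lemma U_X: "U n \<subseteq> X" unfolding U_def using Sn by auto
lemma U_mono: "m \<le> n \<Longrightarrow> U m \<subseteq> U n" unfolding U_def by (rule UN_mono) auto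
lemma U_near: "Ms - V (U n) < inverse (real (Suc n))"
proof -
  have "V (Sn n) \<le> V (U n)" by (rule V_mono[OF U_fin U_X]) (auto simp: U_def)
  then show ?thesis using Sn[of n] by linarith
qed

definition sq :: "nat \<Rightarrow> ('a \<times> real) list" where "sq n = ip_S (U n)"

lemma sq_centres: "set (map fst (sq n)) \<subseteq> X" unfolding sq_def using ipS_centres U_fin U_X by auto

lemma sq_cauchy_le: "m \<ge> n \<Longrightarrow> kgram KS (kdiff (sq m) (sq n)) < inverse (real (Suc n))"
proof -
  assume mn: "m \<ge> n"
  have "kgram KS (kdiff (sq m) (sq n)) = V (U m) - V (U n)"
    unfolding sq_def by (rule V_diff[OF U_fin U_X U_mono[OF mn]])
  also have "\<dots> \<le> Ms - V (U n)" using V_le_Ms[OF U_fin U_X, of m] by simp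
  finally show ?thesis using U_near[of n] by linarith
qed

lemma approx_h: "rkhs_approx X KS h sq"
  unfolding rkhs_approx_def
proof (intro conjI allI impI ballI)
  show "set (map fst (sq n)) \<subseteq> X" for n by (rule sq_centres)
next
  fix e :: real assume e: "e > 0"
  obtain N where N: "inverse (real (Suc N)) < e" using reals_Archimedean[OF e] by auto
  show "\<exists>N. \<forall>m\<ge>N. \<forall>n\<ge>N. kgram KS (kdiff (sq m) (sq n)) < e"
  proof (intro exI allI impI)
    fix m n assume m: "m \<ge> N" and n: "n \<ge> N"
    have i: "inverse (real (Suc n)) \<le> inverse (real (Suc N))" using n by (simp add: le_imp_inverse_le)
    show "kgram KS (kdiff (sq m) (sq n)) < e"
    proof (cases "m \<ge> n")
      case True then show ?thesis using sq_cauchy_le[OF True] i N by linarith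
    next
      case False
      then have "n \<ge> m" by simp
      have i2: "inverse (real (Suc m)) \<le> inverse (real (Suc N))" using m by (simp add: le_imp_inverse_le)
      have "kgram KS (kdiff (sq m) (sq n)) = kgram KS (kdiff (sq n) (sq m))"
        by (rule kgram_kdiff_sym[OF KSk sq_centres sq_centres])
      then show ?thesis using sq_cauchy_le[OF \<open>n \<ge> m\<close>] i2 N by linarith
    qed
  qed
next
  fix x assume x: "x \<in> X"
  define W where "W n = insert x (U n)" for n
  have Wf1: "finite (W n)" for n unfolding W_def by (simp add: U_fin)
  have Wf2: "W n \<subseteq> X" for n unfolding W_def using U_X[of n] x by simp
  have bnd: "norm (kexp KS (sq n) x - h x) \<le> sqrt (KS x x) * sqrt (inverse (real (Suc n)))" for n
  proof -
    have cW: "set (map fst (ip_S (W n))) \<subseteq> X" using ipS_centres[OF Wf1[of n]] Wf2[of n] by simp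
    have d: "set (map fst (kdiff (ip_S (W n)) (sq n))) \<subseteq> X"
      unfolding kdiff_negl using cW sq_centres[of n] by simp
    have c1: "set (map fst [(x, 1::real)]) \<subseteq> X" using x by simp
    have xW: "x \<in> W n" unfolding W_def by simp
    have hx: "kexp KS (ip_S (W n)) x = h x" by (rule ipS_eval[OF Wf1 Wf2 xW])
    have e0: "kexp KS (ip_S (W n)) x - kexp KS (sq n) x = ip KS [(x,1)] (kdiff (ip_S (W n)) (sq n))"
      unfolding kdiff_negl ip_append2 ip_negl2 kexp_ip by simp
    have e1: "\<bar>ip KS [(x,1)] (kdiff (ip_S (W n)) (sq n))\<bar> \<le> sqrt (kgram KS [(x,1)]) * sqrt (kgram KS (kdiff (ip_S (W n)) (sq n)))"
      by (rule cs_abs[OF KSk c1 d])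
    have e2: "kgram KS [(x,1)] = KS x x" unfolding kgram_def by simp
    have e3: "kgram KS (kdiff (ip_S (W n)) (sq n)) = V (W n) - V (U n)"
      unfolding sq_def by (rule V_diff[OF Wf1 Wf2]) (simp add: W_def subset_insertI)
    have e4: "sqrt (V (W n) - V (U n)) \<le> sqrt (inverse (real (Suc n)))"
    proof (rule real_sqrt_le_mono)
      show "V (W n) - V (U n) \<le> inverse (real (Suc n))"
        using V_le_Ms[OF Wf1 Wf2, of n] U_near[of n] by linarith
    qed
    have e5: "sqrt (KS x x) \<ge> 0"
      using kgram_nonneg[OF KSk c1] unfolding e2 by simp
    have e6: "sqrt (KS x x) * sqrt (V (W n) - V (U n)) \<le> sqrt (KS x x) * sqrt (inverse (real (Suc n)))"
      by (rule mult_left_mono[OF e4 e5])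
    have "norm (kexp KS (sq n) x - h x) = \<bar>ip KS [(x,1)] (kdiff (ip_S (W n)) (sq n))\<bar>"
      using e0 hx by (simp add: abs_minus_commute)
    also have "\<dots> \<le> sqrt (KS x x) * sqrt (V (W n) - V (U n))" using e1 unfolding e2 e3 .
    also have "\<dots> \<le> sqrt (KS x x) * sqrt (inverse (real (Suc n)))" by (rule e6)
    finally show ?thesis .
  qed
  have t0: "(\<lambda>n. inverse (real (Suc n))) \<longlonglongrightarrow> 0" by (rule LIMSEQ_inverse_real_of_nat)
  have "(\<lambda>n. sqrt (inverse (real (Suc n)))) \<longlonglongrightarrow> sqrt 0" by (rule tendsto_real_sqrt[OF t0])
  then have "(\<lambda>n. sqrt (KS x x) * sqrt (inverse (real (Suc n)))) \<longlonglongrightarrow> sqrt (KS x x) * 0"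
    by (intro tendsto_mult_left) simp
  then have t1: "(\<lambda>n. sqrt (KS x x) * sqrt (inverse (real (Suc n)))) \<longlonglongrightarrow> 0" by simp
  have "(\<lambda>n. kexp KS (sq n) x - h x) \<longlonglongrightarrow> 0"
    by (rule Lim_null_comparison[OF always_eventually t1]) (use bnd in blast)
  then have "(\<lambda>n. kexp KS (sq n) x - h x + h x) \<longlonglongrightarrow> 0 + h x" by (rule tendsto_add) simp
  then show "(\<lambda>n. kexp KS (sq n) x) \<longlonglongrightarrow> h x" by simp
qed

lemma h_in_rkhs: "in_rkhs X KS h"
  unfolding in_rkhs_def using approx_h by blast

end



lemma ucb_step:
  assumes K: "is_kernel X k" and sp: "\<sigma> > 0" and fin: "in_rkhs X k f"
    and gin: "in_rkhs X (\<lambda>u v. \<sigma>\<^sup>2 * delta u v) g" and hdef: "h = (\<lambda>u. f u + g u)"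
    and xsX: "set xs \<subseteq> X" and dxs: "distinct xs" and u: "u \<in> X"
  shows "\<bar>h u - post_mean k \<sigma> xs (map h xs) u\<bar> \<le> rkhs_norm X (ksig k \<sigma>) h * (sqrt (post_var k \<sigma> xs u) + \<sigma>)"
proof -
  have hin: "in_rkhs X (ksig k \<sigma>) h" by (rule h_in_rkhs[OF K sp fin gin hdef])
  have KS: "is_kernel X (ksig k \<sigma>)" by (rule ksig_kernel[OF K])
  define \<beta> where "\<beta> = rkhs_norm X (ksig k \<sigma>) h"
  have b0: "\<beta> \<ge> 0" unfolding \<beta>_def by (rule rkhs_norm_props(1)[OF KS hin])
  have cX: "set (map fst (cres k \<sigma> xs u)) \<subseteq> X" by (rule cres_centres[OF K xsX sp u])
  have e1: "\<bar>evalc (cres k \<sigma> xs u) h\<bar> \<le> \<beta> * sqrt (kgram (ksig k \<sigma>) (cres k \<sigma> xs u))"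
    unfolding \<beta>_def by (rule rkhs_norm_props(2)[OF KS hin cX])
  have e2: "evalc (cres k \<sigma> xs u) h = h u - post_mean k \<sigma> xs (map h xs) u"
  proof -
    have pm: "post_mean k \<sigma> xs (map h xs) u = alpha k \<sigma> xs u \<bullet> vec (length xs) (\<lambda>i. map h xs ! i)"
      by (rule post_mean_eq[OF K xsX sp]) simp
    have "vec (length xs) (\<lambda>i. map h xs ! i) = vec (length xs) (\<lambda>i. h (xs ! i))"
      by (rule eq_vecI) auto
    then show ?thesis unfolding evalc_cres[OF K xsX sp] pm by simp
  qed
  have pv0: "pv k \<sigma> xs u \<ge> 0" by (rule pv_nonneg[OF K xsX sp u])
  have e3: "kgram (ksig k \<sigma>) (cres k \<sigma> xs u) \<le> pv k \<sigma> xs u + \<sigma>\<^sup>2"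
    by (rule kgram_ksig_cres_le[OF K xsX sp dxs u])
  have "sqrt (kgram (ksig k \<sigma>) (cres k \<sigma> xs u)) \<le> sqrt (pv k \<sigma> xs u + \<sigma>\<^sup>2)"
    by (rule real_sqrt_le_mono[OF e3])
  also have "\<dots> \<le> sqrt (pv k \<sigma> xs u) + sqrt (\<sigma>\<^sup>2)" by (rule sqrt_add_le_add_sqrt[OF pv0]) simp
  also have "sqrt (\<sigma>\<^sup>2) = \<sigma>" using sp by simp
  finally have "sqrt (kgram (ksig k \<sigma>) (cres k \<sigma> xs u)) \<le> sqrt (post_var k \<sigma> xs u) + \<sigma>"
    unfolding post_var_eq[OF K xsX sp] .
  then have "\<beta> * sqrt (kgram (ksig k \<sigma>) (cres k \<sigma> xs u)) \<le> \<beta> * (sqrt (post_var k \<sigma> xs u) + \<sigma>)"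
    by (rule mult_left_mono[OF _ b0])
  with e1 e2 show ?thesis unfolding \<beta>_def by simp
qed

lemma g_bound:
  assumes sp: "\<sigma> > 0" and gin: "in_rkhs X (\<lambda>u v. \<sigma>\<^sup>2 * delta u v) g" and u: "u \<in> X"
  shows "\<bar>g u\<bar> \<le> rkhs_norm X (\<lambda>u v. \<sigma>\<^sup>2 * delta u v) g * \<sigma>"
proof -
  have "\<bar>evalc [(u, 1)] g\<bar> \<le> rkhs_norm X (\<lambda>u v. \<sigma>\<^sup>2 * delta u v) g * sqrt (kgram (\<lambda>u v. \<sigma>\<^sup>2 * delta u v) [(u, 1)])"
    by (rule rkhs_norm_props(2)[OF delta_kernel gin]) (use u in simp)
  moreover have "kgram (\<lambda>u v. \<sigma>\<^sup>2 * delta u v) [(u, 1)] = \<sigma>\<^sup>2" unfolding kgram_def delta_def by simp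
  ultimately show ?thesis using sp by (simp add: evalc_def)
qed

lemma pv_le_B:
  assumes K: "is_kernel X k" and sp: "\<sigma> > 0" and xsX: "set xs \<subseteq> X" and u: "u \<in> X"
    and B: "\<forall>u\<in>X. \<forall>v\<in>X. ksig k \<sigma> u v \<le> B"
  shows "pv k \<sigma> xs u \<le> B"
proof -
  have "pv k \<sigma> xs u \<le> k u u" by (rule pv_le[OF K xsX sp])
  moreover have "k u u + \<sigma>\<^sup>2 \<le> B"
  proof -
    have "ksig k \<sigma> u u \<le> B" using B u by blast
    then show ?thesis unfolding ksig_def delta_def by simp
  qed
  moreover have "\<sigma>\<^sup>2 \<ge> 0" by simp
  ultimately show ?thesis by linarith
qed

lemma info_bdd:
  assumes K: "is_kernel X k" and sp: "\<sigma> > 0" and B: "\<forall>u\<in>X. \<forall>v\<in>X. ksig k \<sigma> u v \<le> B" and Bp: "B > 0"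
  shows "bdd_above ((\<lambda>xs. 1/2 * ln (det (1\<^sub>m T + (1 / \<sigma>\<^sup>2) \<cdot>\<^sub>m gram_mat k xs))) ` {xs. length xs = T \<and> set xs \<subseteq> X})"
proof (rule bdd_aboveI[of _ "1/2 * (T * ln (1 + B / \<sigma>\<^sup>2))"])
  fix y assume "y \<in> (\<lambda>xs. 1/2 * ln (det (1\<^sub>m T + (1 / \<sigma>\<^sup>2) \<cdot>\<^sub>m gram_mat k xs))) ` {xs. length xs = T \<and> set xs \<subseteq> X}"
  then obtain ys where ys: "length ys = T" "set ys \<subseteq> X"
    and y: "y = 1/2 * ln (det (1\<^sub>m T + (1 / \<sigma>\<^sup>2) \<cdot>\<^sub>m gram_mat k ys))" by auto
  have "ln (det (1\<^sub>m T + (1 / \<sigma>\<^sup>2) \<cdot>\<^sub>m gram_mat k ys)) = (\<Sum>i<T. ln (1 + pv k \<sigma> (take i ys) (ys ! i) / \<sigma>\<^sup>2))"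
    using ln_det_info[OF K ys(2) sp] ys(1) by simp
  also have "\<dots> \<le> (\<Sum>i<T. ln (1 + B / \<sigma>\<^sup>2))"
  proof (rule sum_mono)
    fix i assume i: "i \<in> {..<T}"
    have tX: "set (take i ys) \<subseteq> X" using ys(2) by (meson in_set_takeD subsetD subsetI)
    have yi: "ys ! i \<in> X" using ys i by auto
    have p0: "pv k \<sigma> (take i ys) (ys ! i) \<ge> 0" by (rule pv_nonneg[OF K tX sp yi])
    have pB: "pv k \<sigma> (take i ys) (ys ! i) \<le> B" by (rule pv_le_B[OF K sp tX yi B])
    have "pv k \<sigma> (take i ys) (ys ! i) / \<sigma>\<^sup>2 \<le> B / \<sigma>\<^sup>2" using pB sp by (simp add: divide_right_mono)
    moreover have "pv k \<sigma> (take i ys) (ys ! i) / \<sigma>\<^sup>2 \<ge> 0" using p0 by simp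
    ultimately show "ln (1 + pv k \<sigma> (take i ys) (ys ! i) / \<sigma>\<^sup>2) \<le> ln (1 + B / \<sigma>\<^sup>2)"
      by (subst ln_le_cancel_iff) auto
  qed
  also have "\<dots> = T * ln (1 + B / \<sigma>\<^sup>2)" by simp
  finally show "y \<le> 1/2 * (T * ln (1 + B / \<sigma>\<^sup>2))" unfolding y by simp
qed

theorem theorem4:
  fixes X :: "'a::euclidean_space set"
    and k :: "'a \<Rightarrow> 'a \<Rightarrow> real"
    and \<sigma> B :: real
    and f g h :: "'a \<Rightarrow> real"
    and T :: nat
    and x :: "nat \<Rightarrow> 'a"
    and xstar :: 'a
  assumes "compact X"
    and "is_kernel X k"
    and "\<sigma> > 0"
    and "\<forall>u\<in>X. \<forall>v\<in>X. ksig k \<sigma> u v \<le> B"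
    and "in_rkhs X k f"
    and "in_rkhs X (\<lambda>u v. \<sigma>\<^sup>2 * delta u v) g"
    and "h = (\<lambda>u. f u + g u)"
    and "xstar \<in> X" and "\<forall>u\<in>X. f u \<le> f xstar"
    and "T \<ge> 1"
    and alg: "\<forall>t\<in>{1..T}. x t \<in> X \<and>
       (\<forall>u\<in>X. post_mean k \<sigma> (map x [1..<t]) (map (\<lambda>i. h (x i)) [1..<t]) u
                 + rkhs_norm X (ksig k \<sigma>) h * sqrt (post_var k \<sigma> (map x [1..<t]) u)
             \<le> post_mean k \<sigma> (map x [1..<t]) (map (\<lambda>i. h (x i)) [1..<t]) (x t)
                 + rkhs_norm X (ksig k \<sigma>) h * sqrt (post_var k \<sigma> (map x [1..<t]) (x t)))"
    and "inj_on x {1..T}"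
  shows "(\<Sum>t=1..T. f xstar - f (x t))
           \<le> rkhs_norm X (ksig k \<sigma>) h
               * sqrt (T * (8 * B / ln (1 + B / \<sigma>\<^sup>2)) * max_info_gain X k \<sigma> T)
             + 2 * T * (rkhs_norm X (ksig k \<sigma>) h + rkhs_norm X (\<lambda>u v. \<sigma>\<^sup>2 * delta u v) g) * \<sigma>
         \<and> f xstar - (MAX t\<in>{1..T}. f (x t))
           \<le> rkhs_norm X (ksig k \<sigma>) h
               * sqrt ((8 * B / ln (1 + B / \<sigma>\<^sup>2)) * max_info_gain X k \<sigma> T / T)
             + 2 * (rkhs_norm X (ksig k \<sigma>) h + rkhs_norm X (\<lambda>u v. \<sigma>\<^sup>2 * delta u v) g) * \<sigma>"
proof -
  note K = assms(2) and sp = assms(3) and Bb = assms(4) and fin = assms(5) and gin = assms(6)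
    and hdef = assms(7) and xsX = assms(8) and fmax = assms(9) and T1 = assms(10) and inj = assms(12)
  define \<beta> where "\<beta> = rkhs_norm X (ksig k \<sigma>) h"
  define \<gamma> where "\<gamma> = rkhs_norm X (\<lambda>u v. \<sigma>\<^sup>2 * delta u v) g"
  define N where "N = max_info_gain X k \<sigma> T"
  define L where "L = ln (1 + B / \<sigma>\<^sup>2)"
  define P where "P t = post_var k \<sigma> (map x [1..<t]) (x t)" for t
  have hin: "in_rkhs X (ksig k \<sigma>) h" by (rule h_in_rkhs[OF K sp fin gin hdef])
  have b0: "\<beta> \<ge> 0" unfolding \<beta>_def by (rule rkhs_norm_props(1)[OF ksig_kernel[OF K] hin])
  have g0: "\<gamma> \<ge> 0" unfolding \<gamma>_def by (rule rkhs_norm_props(1)[OF delta_kernel gin])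
  have xX: "x t \<in> X" if "t \<in> {1..T}" for t using alg that by blast
  have xsX': "set (map x [1..<t]) \<subseteq> X" if "t \<le> T" for t using xX that by auto
  have dist: "distinct (map x [1..<t])" if "t \<le> T" for t
    using that by (simp add: distinct_map) (rule inj_on_subset[OF inj], auto)
  have Bpos: "B > 0"
  proof -
    have "kgram k [(xstar, 1)] \<ge> 0" by (rule kgram_nonneg[OF K]) (use xsX in simp)
    then have "k xstar xstar \<ge> 0" unfolding kgram_def by simp
    moreover have "ksig k \<sigma> xstar xstar \<le> B" using Bb xsX by blast
    then have "k xstar xstar + \<sigma>\<^sup>2 \<le> B" unfolding ksig_def delta_def by simp
    moreover have "\<sigma>\<^sup>2 > 0" using sp by simp
    ultimately show ?thesis by linarith
  qed
  have Lpos: "L > 0"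
  proof -
    have "B / \<sigma>\<^sup>2 > 0" using Bpos sp by simp
    then show ?thesis unfolding L_def by (intro ln_gt_zero) linarith
  qed
  have P0: "P t \<ge> 0" if "t \<in> {1..T}" for t
  proof -
    have s: "set (map x [1..<t]) \<subseteq> X" using that by (intro xsX') auto
    show ?thesis unfolding P_def post_var_eq[OF K s sp] by (rule pv_nonneg[OF K s sp xX[OF that]])
  qed
  have PB: "P t \<le> B" if "t \<in> {1..T}" for t
  proof -
    have s: "set (map x [1..<t]) \<subseteq> X" using that by (intro xsX') auto
    show ?thesis unfolding P_def post_var_eq[OF K s sp] by (rule pv_le_B[OF K sp s xX[OF that] Bb])
  qed
  have step: "f xstar - f (x t) \<le> 2 * \<beta> * sqrt (P t) + 2 * (\<beta> + \<gamma>) * \<sigma>" if t: "t \<in> {1..T}" for t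
  proof -
    define xs where "xs = map x [1..<t]"
    have tT: "t \<le> T" using t by simp
    have xsXt: "set xs \<subseteq> X" unfolding xs_def by (rule xsX'[OF tT])
    have dxs: "distinct xs" unfolding xs_def by (rule dist[OF tT])
    have ys: "map (\<lambda>i. h (x i)) [1..<t] = map h xs" unfolding xs_def by simp
    define pm where "pm u = post_mean k \<sigma> xs (map h xs) u" for u
    define sd where "sd u = sqrt (post_var k \<sigma> xs u)" for u
    have A1: "\<bar>h xstar - pm xstar\<bar> \<le> \<beta> * (sd xstar + \<sigma>)"
      unfolding pm_def sd_def \<beta>_def by (rule ucb_step[OF K sp fin gin hdef xsXt dxs xsX])
    have A2: "\<bar>h (x t) - pm (x t)\<bar> \<le> \<beta> * (sd (x t) + \<sigma>)"
      unfolding pm_def sd_def \<beta>_def by (rule ucb_step[OF K sp fin gin hdef xsXt dxs xX[OF t]])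
    have A3: "pm xstar + \<beta> * sd xstar \<le> pm (x t) + \<beta> * sd (x t)"
    proof -
      have e: "map h xs = map (\<lambda>i. h (x i)) [1..<t]" unfolding xs_def by simp
      show ?thesis unfolding pm_def sd_def \<beta>_def e using alg t xsX unfolding xs_def by blast
    qed
    have G1: "\<bar>g xstar\<bar> \<le> \<gamma> * \<sigma>" unfolding \<gamma>_def by (rule g_bound[OF sp gin xsX])
    have G2: "\<bar>g (x t)\<bar> \<le> \<gamma> * \<sigma>" unfolding \<gamma>_def by (rule g_bound[OF sp gin xX[OF t]])
    have sdP: "sd (x t) = sqrt (P t)" unfolding sd_def P_def xs_def ..
    have "f xstar - f (x t) = (h xstar - h (x t)) - g xstar + g (x t)" using hdef by simp
    then show ?thesis using A1 A2 A3 G1 G2 sdP by (simp add: algebra_simps abs_le_iff)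
  qed
  have R1: "(\<Sum>t=1..T. f xstar - f (x t)) \<le> 2 * \<beta> * (\<Sum>t=1..T. sqrt (P t)) + 2 * T * (\<beta> + \<gamma>) * \<sigma>"
  proof -
    have "(\<Sum>t=1..T. f xstar - f (x t)) \<le> (\<Sum>t=1..T. 2 * \<beta> * sqrt (P t) + 2 * (\<beta> + \<gamma>) * \<sigma>)"
      by (rule sum_mono) (rule step)
    also have "\<dots> = 2 * \<beta> * (\<Sum>t=1..T. sqrt (P t)) + 2 * T * (\<beta> + \<gamma>) * \<sigma>"
      by (simp add: sum.distrib sum_distrib_left)
    finally show ?thesis .
  qed
  define xsT where "xsT = map x [1..<Suc T]"
  have xsTX: "set xsT \<subseteq> X" unfolding xsT_def using xsX'[of "Suc T"] xX by auto
  have lnd: "ln (det (1\<^sub>m T + (1 / \<sigma>\<^sup>2) \<cdot>\<^sub>m gram_mat k xsT)) = (\<Sum>t=1..T. ln (1 + P t / \<sigma>\<^sup>2))"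
  proof -
    have "ln (det (1\<^sub>m T + (1 / \<sigma>\<^sup>2) \<cdot>\<^sub>m gram_mat k xsT)) = (\<Sum>i<T. ln (1 + pv k \<sigma> (take i xsT) (xsT ! i) / \<sigma>\<^sup>2))"
    proof -
      have lT: "length xsT = T" unfolding xsT_def by simp
      show ?thesis using ln_det_info[OF K xsTX sp] unfolding lT .
    qed
    also have "\<dots> = (\<Sum>i<T. ln (1 + P (Suc i) / \<sigma>\<^sup>2))"
    proof (intro sum.cong refl)
      fix i assume i: "i \<in> {..<T}"
      have tk: "take i xsT = map x [1..<Suc i]" unfolding xsT_def using i by (simp add: take_map take_upt)
      have nt: "xsT ! i = x (Suc i)" unfolding xsT_def using i by (simp del: upt_Suc)
      have "pv k \<sigma> (take i xsT) (xsT ! i) = P (Suc i)"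
      proof -
        have s: "set (map x [1..<Suc i]) \<subseteq> X" using i by (intro xsX') auto
        show ?thesis unfolding tk nt P_def post_var_eq[OF K s sp] ..
      qed
      then show "ln (1 + pv k \<sigma> (take i xsT) (xsT ! i) / \<sigma>\<^sup>2) = ln (1 + P (Suc i) / \<sigma>\<^sup>2)" by simp
    qed
    also have "\<dots> = (\<Sum>t=1..T. ln (1 + P t / \<sigma>\<^sup>2))" by (simp add: sum.atLeast1_atMost_eq)
    finally show ?thesis .
  qed
  have NI: "1/2 * ln (det (1\<^sub>m T + (1 / \<sigma>\<^sup>2) \<cdot>\<^sub>m gram_mat k xsT)) \<le> N"
    unfolding N_def max_info_gain_def
    by (rule cSUP_upper[OF _ info_bdd[OF K sp Bb Bpos]]) (use xsTX in \<open>simp add: xsT_def\<close>)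
  have SP: "(\<Sum>t=1..T. P t) \<le> B / L * (2 * N)"
  proof -
    have "(\<Sum>t=1..T. P t) \<le> (\<Sum>t=1..T. B / L * ln (1 + P t / \<sigma>\<^sup>2))"
      by (rule sum_mono) (unfold L_def, rule log_ineq[OF sp Bpos P0 PB], auto)
    also have "\<dots> = B / L * ln (det (1\<^sub>m T + (1 / \<sigma>\<^sup>2) \<cdot>\<^sub>m gram_mat k xsT))"
      unfolding lnd by (simp add: sum_distrib_left)
    also have "\<dots> \<le> B / L * (2 * N)" using NI Bpos Lpos by (intro mult_left_mono) auto
    finally show ?thesis .
  qed
  have SS: "(\<Sum>t=1..T. sqrt (P t)) \<le> sqrt (T * (B / L * (2 * N)))"
  proof -
    have "(\<Sum>t=1..T. sqrt (P t))\<^sup>2 \<le> (\<Sum>t=1..T. (sqrt (P t))\<^sup>2) * card {1..T}"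
      by (rule sum_squared_le_sum_of_squares)
    also have "(\<Sum>t=1..T. (sqrt (P t))\<^sup>2) = (\<Sum>t=1..T. P t)" using P0 by (intro sum.cong) auto
    also have "card {1..T} = T" by simp
    also have "(\<Sum>t=1..T. P t) * real T \<le> (B / L * (2 * N)) * real T"
      by (rule mult_right_mono[OF SP]) simp
    finally have sq: "(\<Sum>t=1..T. sqrt (P t))\<^sup>2 \<le> T * (B / L * (2 * N))" by (simp add: mult.commute)
    have nn: "(\<Sum>t=1..T. sqrt (P t)) \<ge> 0" by (intro sum_nonneg) (use P0 in simp)
    have "(\<Sum>t=1..T. sqrt (P t)) = sqrt ((\<Sum>t=1..T. sqrt (P t))\<^sup>2)" using nn by simp
    also have "\<dots> \<le> sqrt (T * (B / L * (2 * N)))" by (rule real_sqrt_le_mono[OF sq])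
    finally show ?thesis .
  qed
  have key: "2 * \<beta> * (\<Sum>t=1..T. sqrt (P t)) \<le> \<beta> * sqrt (T * (8 * B / L) * N)"
  proof -
    have "2 * (\<Sum>t=1..T. sqrt (P t)) \<le> 2 * sqrt (T * (B / L * (2 * N)))" using SS by simp
    also have "2 * sqrt (T * (B / L * (2 * N))) = sqrt (T * (8 * B / L) * N)"
    proof -
      have a: "sqrt (2\<^sup>2 * (T * (B / L * (2 * N)))) = 2 * sqrt (T * (B / L * (2 * N)))"
        unfolding real_sqrt_mult by simp
      have b: "2\<^sup>2 * (T * (B / L * (2 * N))) = T * (8 * B / L) * N" by (simp add: field_simps)
      show "2 * sqrt (T * (B / L * (2 * N))) = sqrt (T * (8 * B / L) * N)" using a unfolding b by simp
    qed
    finally have "2 * (\<Sum>t=1..T. sqrt (P t)) \<le> sqrt (T * (8 * B / L) * N)" .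
    then have "\<beta> * (2 * (\<Sum>t=1..T. sqrt (P t))) \<le> \<beta> * sqrt (T * (8 * B / L) * N)"
      by (rule mult_left_mono[OF _ b0])
    then show ?thesis by (simp add: mult.assoc mult.left_commute)
  qed
  have RT: "(\<Sum>t=1..T. f xstar - f (x t)) \<le> \<beta> * sqrt (T * (8 * B / L) * N) + 2 * T * (\<beta> + \<gamma>) * \<sigma>"
    using R1 key by linarith
  have Tpos: "real T > 0" using T1 by simp
  define Mx where "Mx = (MAX t\<in>{1..T}. f (x t))"
  have Mx: "f (x t) \<le> Mx" if "t \<in> {1..T}" for t unfolding Mx_def using that by (intro Max_ge) auto
  have "T * (f xstar - Mx) = (\<Sum>t=1..T. f xstar - Mx)" by simp
  also have "\<dots> \<le> (\<Sum>t=1..T. f xstar - f (x t))" by (rule sum_mono) (use Mx in auto)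
  finally have "T * (f xstar - Mx) \<le> \<beta> * sqrt (T * (8 * B / L) * N) + 2 * T * (\<beta> + \<gamma>) * \<sigma>"
    using RT by linarith
  then have "f xstar - Mx \<le> (\<beta> * sqrt (T * (8 * B / L) * N) + 2 * T * (\<beta> + \<gamma>) * \<sigma>) / T"
    using Tpos by (simp add: field_simps)
  also have "\<dots> = \<beta> * (sqrt (T * (8 * B / L) * N) / T) + 2 * (\<beta> + \<gamma>) * \<sigma>"
    using Tpos by (simp add: field_simps)
  also have "sqrt (T * (8 * B / L) * N) / T = sqrt ((8 * B / L) * N / T)"
  proof -
    have "sqrt (T * (8 * B / L) * N) = sqrt T * sqrt ((8 * B / L) * N)" by (subst mult.assoc) (rule real_sqrt_mult)
    moreover have "sqrt ((8 * B / L) * N / T) = sqrt ((8 * B / L) * N) / sqrt T" by (rule real_sqrt_divide)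
    moreover have tt: "sqrt T * sqrt T = T" using Tpos by simp
    moreover have sT: "sqrt T > 0" using Tpos by simp
    moreover have "sqrt T * a / (sqrt T * sqrt T) = a / sqrt T" for a
      using sT by (simp del: real_sqrt_mult_self)
    ultimately show ?thesis by metis
  
  qed
  finally have ST: "f xstar - Mx \<le> \<beta> * sqrt ((8 * B / L) * N / T) + 2 * (\<beta> + \<gamma>) * \<sigma>" .
  show ?thesis using RT ST unfolding \<beta>_def \<gamma>_def N_def L_def Mx_def by simp
qed


end
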